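(* Let $N,N'$ be phylogenetic networks in tier $k>0$ on a label set $X$ with $|X|=n$, and suppose $N$ and $N'$ are unlabelled isomorphic. Then there is a sequence of at most $2n$ valid head moves transforming $N$ into $N'$ (as labelled networks).
   Context: A (binary) phylogenetic network on a finite label set $X$ ($|X|\ge 2$) is a directed acyclic graph without parallel edges having exactly one root (indegree 0, outdegree 1), exactly $|X|$ leaves (indegree 1, outdegree 0) bijectively labelled by $X$, and all other nodes are either split nodes (indegree 1, outdegree 2) or reticulations (indegree 2, outdegree 1). Tier $k$: exactly $k$ reticulations. Two networks are unlabelled isomorphic if there is a bijection between their node sets preserving edges (ignoring leaf labels); labelled networks are identified up to label-preserving isomorphism. Subdividing an edge $(a,b)$ means replacing it by a new node $x$ and edges $(a,x),(x,b)$; suppressing an indegree-1 outdegree-1 node $x$ with parent $a$ and child $b$ means deleting $x$ and its edges and adding $(a,b)$. Head move of $(u,v)$ ($v$ a reticulation) to an edge $f$: delete $(u,v)$, subdivide $f$ with new node $v'$, suppress $v$, add $(u,v')$; valid only if the result is a phylogenetic network. *)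

theory Defs
  imports Main "HOL-Library.Multiset"
begin

text \<open>A network: node set, arcs as a multiset (so that parallel arcs are representable
during head moves; phylogenetic networks forbid them), and a leaf labelling.\<close>

record ('v, 'x) pnet =
  nodes :: "'v set"
  arcs  :: "('v \<times> 'v) multiset"
  lab   :: "'v \<Rightarrow> 'x"

definition indeg :: "('v \<times> 'v) multiset \<Rightarrow> 'v \<Rightarrow> nat" where
  "indeg E x = size (filter_mset (\<lambda>e. snd e = x) E)"

definition outdeg :: "('v \<times> 'v) multiset \<Rightarrow> 'v \<Rightarrow> nat" where
  "outdeg E x = size (filter_mset (\<lambda>e. fst e = x) E)"

definition leaves :: "('v, 'x) pnet \<Rightarrow> 'v set" where
  "leaves N = {x \<in> nodes N. indeg (arcs N) x = 1 \<and> outdeg (arcs N) x = 0}"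

definition reticulations :: "('v, 'x) pnet \<Rightarrow> 'v set" where
  "reticulations N = {x \<in> nodes N. indeg (arcs N) x = 2 \<and> outdeg (arcs N) x = 1}"

definition phylo_net :: "'x set \<Rightarrow> ('v, 'x) pnet \<Rightarrow> bool" where
  "phylo_net X N \<longleftrightarrow>
     finite X \<and> card X \<ge> 2 \<and>
     finite (nodes N) \<and>
     (\<forall>e \<in># arcs N. fst e \<in> nodes N \<and> snd e \<in> nodes N) \<and>
     (\<forall>e. count (arcs N) e \<le> 1) \<and>
     acyclic (set_mset (arcs N)) \<and>
     card {x \<in> nodes N. indeg (arcs N) x = 0} = 1 \<and>
     (\<forall>x \<in> nodes N.
        (indeg (arcs N) x = 0 \<and> outdeg (arcs N) x = 1) \<or>
        (indeg (arcs N) x = 1 \<and> outdeg (arcs N) x = 0) \<or>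
        (indeg (arcs N) x = 1 \<and> outdeg (arcs N) x = 2) \<or>
        (indeg (arcs N) x = 2 \<and> outdeg (arcs N) x = 1)) \<and>
     bij_betw (lab N) (leaves N) X"

definition tier :: "('v, 'x) pnet \<Rightarrow> nat" where
  "tier N = card (reticulations N)"

definition unlabelled_iso :: "('v, 'x) pnet \<Rightarrow> ('w, 'x) pnet \<Rightarrow> bool" where
  "unlabelled_iso N M \<longleftrightarrow>
     (\<exists>\<phi>. bij_betw \<phi> (nodes N) (nodes M) \<and> image_mset (map_prod \<phi> \<phi>) (arcs N) = arcs M)"

definition labelled_iso :: "('v, 'x) pnet \<Rightarrow> ('w, 'x) pnet \<Rightarrow> bool" where
  "labelled_iso N M \<longleftrightarrow>
     (\<exists>\<phi>. bij_betw \<phi> (nodes N) (nodes M) \<and> image_mset (map_prod \<phi> \<phi>) (arcs N) = arcs M \<and>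
          (\<forall>x \<in> leaves N. lab M (\<phi> x) = lab N x))"

text \<open>The newly created subdivision node v' is given the name of the suppressed node v
 (the result is only relevant up to isomorphism).  If f is one of the two remaining
 arcs at v, i.e. (w,v) or (v,c), subdividing and suppressing gives back N.\<close>

definition head_move_result :: "('v, 'x) pnet \<Rightarrow> 'v \<Rightarrow> 'v \<Rightarrow> ('v \<times> 'v) \<Rightarrow> ('v, 'x) pnet" where
  "head_move_result N u v f =
     (let E1 = arcs N - {#(u, v)#};
          w = (THE w. (w, v) \<in># E1);
          c = (THE c. (v, c) \<in># E1)
      in if f = (w, v) \<or> f = (v, c) then N
         else N\<lparr>arcs := E1 - {#(w, v), (v, c), f#} + {#(w, c), (fst f, v), (v, snd f), (u, v)#}\<rparr>)"

definition head_move :: "'x set \<Rightarrow> ('v, 'x) pnet \<Rightarrow> ('v, 'x) pnet \<Rightarrow> bool" where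
  "head_move X N M \<longleftrightarrow>
     (\<exists>u v f. (u, v) \<in># arcs N \<and> v \<in> reticulations N \<and>
              f \<in># arcs N - {#(u, v)#} \<and>
              M = head_move_result N u v f \<and> phylo_net X M)"

end

theory Submission
  imports Defs
begin

definition pend :: "('v \<Rightarrow> 'v) \<Rightarrow> 'v set \<Rightarrow> ('v \<times> 'v) multiset" where
  "pend Q S = image_mset (\<lambda>l. (Q l, l)) (mset_set S)"

lemma indeg_plus[simp]: "indeg (A + B) x = indeg A x + indeg B x"
  by (simp add: indeg_def)
lemma outdeg_plus[simp]: "outdeg (A + B) x = outdeg A x + outdeg B x"
  by (simp add: outdeg_def)
lemma indeg_add_mset[simp]: "indeg (add_mset e A) x = (if snd e = x then 1 else 0) + indeg A x"
  by (simp add: indeg_def)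
lemma outdeg_add_mset[simp]: "outdeg (add_mset e A) x = (if fst e = x then 1 else 0) + outdeg A x"
  by (simp add: outdeg_def)
lemma indeg_empty[simp]: "indeg {#} x = 0" by (simp add: indeg_def)
lemma outdeg_empty[simp]: "outdeg {#} x = 0" by (simp add: outdeg_def)

lemma count_image_mset_set:
  assumes "finite S" shows "count (image_mset Q (mset_set S)) v = card {x\<in>S. Q x = v}"
proof -
  have "count (image_mset Q (mset_set S)) v = size (filter_mset (\<lambda>y. y = v) (image_mset Q (mset_set S)))"
    by (simp add: count_conv_size_mset)
  also have "\<dots> = size (filter_mset (\<lambda>x. Q x = v) (mset_set S))"
    by (simp add: filter_mset_image_mset)
  also have "\<dots> = card {x\<in>S. Q x = v}" using assms by simp
  finally show ?thesis .
qed

lemma indeg_pend: "finite S \<Longrightarrow> indeg (pend Q S) x = (if x \<in> S then 1 else 0)"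
proof -
  assume fin: "finite S"
  have "indeg (pend Q S) x = size (filter_mset (\<lambda>l. l = x) (mset_set S))"
    unfolding indeg_def pend_def by (simp add: filter_mset_image_mset)
  also have "\<dots> = card {l\<in>S. l = x}" using fin by simp
  finally have A: "indeg (pend Q S) x = card {l\<in>S. l = x}" .
  have "{l\<in>S. l = x} = (if x \<in> S then {x} else {})" by auto
  then have "card {l\<in>S. l = x} = (if x \<in> S then 1 else 0)" by simp
  with A show ?thesis by simp
qed

lemma outdeg_pend: "finite S \<Longrightarrow> outdeg (pend Q S) x = card {l\<in>S. Q l = x}"
  unfolding outdeg_def pend_def by (simp add: filter_mset_image_mset)

lemma count_pend: "finite S \<Longrightarrow> count (pend Q S) (a,b) = (if b \<in> S \<and> a = Q b then 1 else 0)"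
proof -
  assume fin: "finite S"
  have "count (pend Q S) (a,b) = size (filter_mset (\<lambda>y. y = (a,b)) (pend Q S))"
    by (simp add: count_conv_size_mset)
  also have "\<dots> = size (filter_mset (\<lambda>l. (Q l, l) = (a,b)) (mset_set S))"
    by (simp add: pend_def filter_mset_image_mset)
  also have "\<dots> = card {l\<in>S. (Q l, l) = (a,b)}" using fin by simp
  also have "\<dots> = (if b \<in> S \<and> a = Q b then 1 else 0)"
  proof (cases "b \<in> S \<and> a = Q b")
    case True
    then have "{l\<in>S. (Q l, l) = (a,b)} = {b}" by auto
    then show ?thesis using True by (simp only:) simp
  next
    case False
    then have "{l\<in>S. (Q l, l) = (a,b)} = {}" by auto
    then show ?thesis using False by (simp only:) simp
  qed
  finally show ?thesis .
qed

lemma mem_pend: "finite S \<Longrightarrow> p \<in># pend Q S \<longleftrightarrow> snd p \<in> S \<and> fst p = Q (snd p)"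
  by (cases p) (simp add: pend_def, auto)

lemma pend_cong: "(\<And>l. l \<in> S \<Longrightarrow> Q l = Q' l) \<Longrightarrow> pend Q S = pend Q' S"
  unfolding pend_def by (cases "finite S") (auto intro!: image_mset_cong)

lemma pend_remove: "finite S \<Longrightarrow> x \<in> S \<Longrightarrow> pend Q S = add_mset (Q x, x) (pend Q (S - {x}))"
  unfolding pend_def by (simp add: mset_set.remove)

lemma acyclic_sink:
  assumes acyc: "acyclic S" and sub: "E \<subseteq> S \<union> {p. snd p \<in> Z}" and tl: "\<forall>p\<in>E. fst p \<notin> Z"
  shows "acyclic E"
proof -
  have key: "(x,y) \<in> E\<^sup>+ \<Longrightarrow> (y,z) \<in> E \<Longrightarrow> (x,y) \<in> S\<^sup>+" for x y z
  proof (induction arbitrary: z rule: trancl_induct)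
    case (base y)
    have "y \<notin> Z" using tl base(2) by force
    then have "(x,y) \<in> S" using sub base(1) by auto
    then show ?case by auto
  next
    case (step y z')
    have "z' \<notin> Z" using tl step(4) by force
    then have "(y,z') \<in> S" using sub step(2) by auto
    have "(x,y) \<in> S\<^sup>+" using step(3)[OF step(2)] .
    then show ?case using \<open>(y,z') \<in> S\<close> by (rule trancl_into_trancl)
  qed
  show ?thesis unfolding acyclic_def
  proof
    fix x show "(x,x) \<notin> E\<^sup>+"
    proof
      assume "(x,x) \<in> E\<^sup>+"
      then obtain y where "(x,y) \<in> E" by (meson tranclD)
      with key[OF \<open>(x,x) \<in> E\<^sup>+\<close>] have "(x,x) \<in> S\<^sup>+" by blast
      with acyc show False by (simp add: acyclic_def)
    qed
  qed
qed

lemma phylo_transfer: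
  assumes "phylo_net X N" "nodes M = nodes N" "lab M = lab N"
   "\<And>x. indeg (arcs M) x = indeg (arcs N) x" "\<And>x. outdeg (arcs M) x = outdeg (arcs N) x"
   "\<forall>e\<in>#arcs M. fst e \<in> nodes N \<and> snd e \<in> nodes N" "\<forall>e. count (arcs M) e \<le> 1"
   "acyclic (set_mset (arcs M))"
  shows "phylo_net X M"
proof -
  have "leaves M = leaves N" using assms(2,4,5) by (simp add: leaves_def)
  then show ?thesis using assms unfolding phylo_net_def by simp
qed


lemma finite_leaves: "phylo_net X N \<Longrightarrow> finite (leaves N)"
  unfolding phylo_net_def leaves_def by auto

lemma card_remove_cnt: "finite S \<Longrightarrow> h \<in> S \<Longrightarrow>
   card {l\<in>S. Q l = v} = card {l\<in>S - {h}. Q l = v} + (if Q h = v then 1 else 0)"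
proof -
  assume f: "finite S" and h: "h \<in> S"
  show ?thesis
  proof (cases "Q h = v")
    case True
    then have "{l\<in>S. Q l = v} = insert h {l\<in>S - {h}. Q l = v}" using h by auto
    then show ?thesis using f True by simp
  next
    case False
    then have "{l\<in>S. Q l = v} = {l\<in>S - {h}. Q l = v}" using h by auto
    then show ?thesis using False by simp
  qed
qed

lemma indeg_zero: "(\<forall>p\<in>#A. snd p \<noteq> x) \<Longrightarrow> indeg A x = 0"
  by (induction A) auto
lemma outdeg_zero: "(\<forall>p\<in>#A. fst p \<noteq> x) \<Longrightarrow> outdeg A x = 0"
  by (induction A) auto

lemma image_upd_gen: "finite L \<Longrightarrow> x \<in> L \<Longrightarrow>
  image_mset (Q(x:=e)) (mset_set L) + {#Q x#} = image_mset Q (mset_set L) + {#e#}"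
proof -
  assume finL: "finite L" and x: "x \<in> L"
  have m: "mset_set L = add_mset x (mset_set (L - {x}))"
    using finL x by (simp add: mset_set.remove)
  have A: "image_mset (Q(x:=e)) (mset_set (L - {x})) = image_mset Q (mset_set (L - {x}))"
    using finL by (auto intro!: image_mset_cong)
  have B: "image_mset (Q(x:=e)) (mset_set L) = add_mset e (image_mset Q (mset_set (L - {x})))"
    by (subst m, simp only: image_mset_add_mset A) simp
  have C: "image_mset Q (mset_set L) = add_mset (Q x) (image_mset Q (mset_set (L - {x})))"
    by (subst m, simp only: image_mset_add_mset)
  show ?thesis unfolding B C by simp
qed

locale gad =
  fixes X :: "'x set" and N :: "('v,'x) pnet" and r :: 'v and Cp :: "('v\<times>'v) multiset"
    and SL :: "'v multiset"
  assumes phyN: "phylo_net X N"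
  and Cp_cnt: "\<forall>e. count Cp e \<le> 1"
  and Cp_ac: "acyclic (set_mset Cp)"
  and Cp_arcs: "\<forall>p\<in>#Cp. fst p \<in> nodes N \<and> snd p \<in> nodes N \<and> snd p \<notin> leaves N \<and> snd p \<noteq> r
                     \<and> fst p \<noteq> r \<and> fst p \<notin> leaves N"
  and r_node: "r \<in> nodes N" and r_nl: "r \<notin> leaves N"
  and SL_ok: "\<forall>v\<in>#SL. v \<in> nodes N \<and> v \<notin> leaves N \<and> v \<noteq> r"
  and inN: "\<And>v. indeg (arcs N) v = indeg Cp v + (if v = r then 2 else 0) + (if v \<in> leaves N then 1 else 0)"
  and outN: "\<And>v. outdeg (arcs N) v = outdeg Cp v + (if v = r then 1 else 0) + count SL v"
begin

lemma finL: "finite (leaves N)" using finite_leaves[OF phyN] .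
lemma leaves_nodes: "leaves N \<subseteq> nodes N" unfolding leaves_def by auto

definition stnet :: "('v \<Rightarrow> 'v) \<Rightarrow> 'v \<Rightarrow> 'v \<Rightarrow> ('v,'x) pnet" where
  "stnet Q e h = N\<lparr>arcs := Cp + {#(e,r),(Q h,r),(r,h)#} + pend Q (leaves N - {h})\<rparr>"

definition valid :: "('v \<Rightarrow> 'v) \<Rightarrow> 'v \<Rightarrow> 'v \<Rightarrow> bool" where
  "valid Q e h \<longleftrightarrow> h \<in> leaves N \<and> Q h \<noteq> e \<and> image_mset Q (mset_set (leaves N)) + {#e#} = SL"

lemma image_cong_L: "(\<And>l. l \<in> leaves N \<Longrightarrow> Q l = Q' l) \<Longrightarrow>
   image_mset Q (mset_set (leaves N)) = image_mset Q' (mset_set (leaves N))"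
  using finL by (auto intro!: image_mset_cong)

lemma stnet_cong:
  assumes "h \<in> leaves N" "\<And>l. l \<in> leaves N \<Longrightarrow> Q l = Q' l" shows "stnet Q e h = stnet Q' e h"
proof -
  have "pend Q (leaves N - {h}) = pend Q' (leaves N - {h})" by (rule pend_cong) (use assms in auto)
  moreover have "Q h = Q' h" using assms by auto
  ultimately show ?thesis unfolding stnet_def by simp
qed

lemma valid_cong: "(\<And>l. l \<in> leaves N \<Longrightarrow> Q l = Q' l) \<Longrightarrow> valid Q e h = valid Q' e h"
  unfolding valid_def using image_cong_L by metis

lemma image_upd: "x \<in> leaves N \<Longrightarrow>
  image_mset ((Q::'v\<Rightarrow>'v)(x:=e)) (mset_set (leaves N)) + {#Q x#} = image_mset Q (mset_set (leaves N)) + {#e#}"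
  by (rule image_upd_gen[OF finL])

lemma stnet_equiv: "h \<in> leaves N \<Longrightarrow> stnet Q e h = stnet (Q(h:=e)) (Q h) h"
proof -
  have "pend Q (leaves N - {h}) = pend (Q(h:=e)) (leaves N - {h})" by (rule pend_cong) auto
  then show ?thesis unfolding stnet_def by (simp add: add_mset_commute)
qed

lemma valid_equiv: "valid Q e h \<Longrightarrow> valid (Q(h:=e)) (Q h) h"
  unfolding valid_def using image_upd by auto

lemma SL_mem: "valid Q e h \<Longrightarrow> l \<in> leaves N \<Longrightarrow> Q l \<in># SL"
  unfolding valid_def using finL by (metis image_eqI set_image_mset finite_set_mset_mset_set union_iff)

lemma SL_mem_e: "valid Q e h \<Longrightarrow> e \<in># SL"
  unfolding valid_def by auto

lemma count_SL: "valid Q e h \<Longrightarrow> count SL v = card {l\<in>leaves N. Q l = v} + (if e = v then 1 else 0)"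
  unfolding valid_def using count_image_mset_set[OF finL] by auto

end

context gad begin

lemma Cp_in: "p \<in># Cp \<Longrightarrow> fst p \<in> nodes N \<and> snd p \<in> nodes N \<and> snd p \<notin> leaves N \<and> snd p \<noteq> r
                     \<and> fst p \<noteq> r \<and> fst p \<notin> leaves N"
  using Cp_arcs by blast

lemma indeg_Cp_r: "indeg Cp r = 0" by (rule indeg_zero) (use Cp_arcs in auto)
lemma outdeg_Cp_r: "outdeg Cp r = 0" by (rule outdeg_zero) (use Cp_arcs in auto)

lemma st_arcs: "arcs (stnet Q e h) = Cp + {#(e,r),(Q h,r),(r,h)#} + pend Q (leaves N - {h})"
  by (simp add: stnet_def)
lemma st_nodes[simp]: "nodes (stnet Q e h) = nodes N" by (simp add: stnet_def)
lemma st_lab[simp]: "lab (stnet Q e h) = lab N" by (simp add: stnet_def)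

lemma valid_facts: assumes "valid Q e h"
  shows "h \<in> leaves N" "Q h \<noteq> e" "e \<in> nodes N" "e \<notin> leaves N" "e \<noteq> r"
    "\<And>l. l \<in> leaves N \<Longrightarrow> Q l \<in> nodes N \<and> Q l \<notin> leaves N \<and> Q l \<noteq> r"
  using assms SL_ok SL_mem[OF assms] SL_mem_e[OF assms] unfolding valid_def by blast+

lemma st_indeg: assumes v: "valid Q e h" shows "indeg (arcs (stnet Q e h)) x = indeg (arcs N) x"
  using valid_facts[OF v] r_nl by (auto simp: st_arcs indeg_pend finL inN)

lemma st_outdeg: assumes v: "valid Q e h" shows "outdeg (arcs (stnet Q e h)) x = outdeg (arcs N) x"
proof -
  have h: "h \<in> leaves N" using valid_facts[OF v] by simp
  have "outdeg (arcs (stnet Q e h)) x = outdeg Cp x + (if e = x then 1 else 0) + (if Q h = x then 1 else 0)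
     + (if r = x then 1 else 0) + card {l\<in>leaves N - {h}. Q l = x}"
    by (simp add: st_arcs outdeg_pend finL)
  also have "\<dots> = outdeg Cp x + (if x = r then 1 else 0) + count SL x"
    using count_SL[OF v, of x] card_remove_cnt[OF finL h, of Q x] by auto
  finally show ?thesis using outN by simp
qed

lemma st_count: assumes v: "valid Q e h" shows "count (arcs (stnet Q e h)) p \<le> 1"
proof (cases p)
  case (Pair a b)
  note vf = valid_facts[OF v]
  show ?thesis
  proof (cases "p \<in># Cp")
    case True
    then have "b \<notin> leaves N" "b \<noteq> r" using Cp_in[OF True] Pair by auto
    then show ?thesis using Cp_cnt True Pair vf by (auto simp: st_arcs count_pend finL)
  next
    case False
    then have c0: "count Cp p = 0" by (simp add: not_in_iff)
    show ?thesis using c0 Pair vf r_nl by (auto simp: st_arcs count_pend finL)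
  qed
qed

lemma st_acyclic: assumes v: "valid Q e h" shows "acyclic (set_mset (arcs (stnet Q e h)))"
proof -
  note vf = valid_facts[OF v]
  define S where "S = set_mset Cp \<union> {(e,r),(Q h,r)}"
  have aS: "acyclic S"
    by (rule acyclic_sink[OF Cp_ac, of S "{r}"]) (use vf Cp_in in \<open>auto simp: S_def\<close>)
  show ?thesis
    by (rule acyclic_sink[OF aS, of _ "leaves N"])
       (use vf Cp_in r_nl in \<open>auto simp: S_def st_arcs mem_pend finL\<close>)
qed

lemma st_phylo: assumes v: "valid Q e h" shows "phylo_net X (stnet Q e h)"
proof (rule phylo_transfer[OF phyN])
  note vf = valid_facts[OF v]
  show "\<forall>p\<in>#arcs (stnet Q e h). fst p \<in> nodes N \<and> snd p \<in> nodes N"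
    using vf Cp_in r_node leaves_nodes by (auto simp: st_arcs mem_pend finL)
qed (use st_indeg[OF v] st_outdeg[OF v] st_count[OF v] st_acyclic[OF v] in auto)

lemma count_SL_r: "count SL r = 0" using SL_ok by (auto simp: not_in_iff[symmetric])

lemma st_ret: assumes v: "valid Q e h" shows "r \<in> reticulations (stnet Q e h)"
  unfolding reticulations_def using st_indeg[OF v, of r] st_outdeg[OF v, of r] inN[of r] outN[of r]
    indeg_Cp_r outdeg_Cp_r count_SL_r r_node r_nl by simp

lemma st_move: assumes v: "valid Q e h" and x: "x \<in> leaves N" "x \<noteq> h" "Q x \<noteq> e"
  shows "head_move X (stnet Q e h) (stnet Q e x)" "valid Q e x"
proof -
  show vx: "valid Q e x" using v x unfolding valid_def by auto
  note vf = valid_facts[OF v]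
  define E1 where "E1 = arcs (stnet Q e h) - {#(e,r)#}"
  have E1: "E1 = Cp + {#(Q h,r),(r,h)#} + pend Q (leaves N - {h})"
    by (simp add: E1_def st_arcs)
  have w: "(THE w. (w, r) \<in># E1) = Q h"
  proof (rule the_equality)
    show "(Q h, r) \<in># E1" by (simp add: E1)
    fix w assume "(w, r) \<in># E1"
    then show "w = Q h" using vf r_nl by (auto simp: E1 mem_pend finL dest: Cp_in)
  qed
  have c: "(THE c. (r, c) \<in># E1) = h"
  proof (rule the_equality)
    show "(r, h) \<in># E1" by (simp add: E1)
    fix c assume "(r, c) \<in># E1"
    then show "c = h" using vf r_nl by (auto simp: E1 mem_pend finL dest: Cp_in)
  qed
  have f1: "(Q x, x) \<noteq> (Q h, r)" using x r_nl by auto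
  have f2: "(Q x, x) \<noteq> (r, h)" using x by auto
  have xL: "x \<in> leaves N - {h}" using x by auto
  have hL: "h \<in> leaves N - {x}" using x vf by auto
  define P0 where "P0 = pend Q (leaves N - {h} - {x})"
  have pe1: "pend Q (leaves N - {h}) = add_mset (Q x, x) P0"
    unfolding P0_def using pend_remove[OF _ xL] finL by simp
  have sw: "leaves N - {x} - {h} = leaves N - {h} - {x}" by auto
  have pe2: "pend Q (leaves N - {x}) = add_mset (Q h, h) P0"
    unfolding P0_def using pend_remove[OF _ hL] finL sw by simp
  have r1: "head_move_result (stnet Q e h) e r (Q x, x) = (stnet Q e h)\<lparr>arcs :=
     E1 - {#(Q h, r), (r, h), (Q x, x)#} + {#(Q h, h), (Q x, r), (r, x), (e, r)#}\<rparr>"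
  proof -
    have nf: "\<not> ((Q x, x) = (Q h, r) \<or> (Q x, x) = (r, h))" using f1 f2 by blast
    show ?thesis unfolding head_move_result_def Let_def E1_def[symmetric] w c
      by (subst if_not_P[OF nf]) (simp only: fst_conv snd_conv)
  qed
  have r2: "E1 - {#(Q h, r), (r, h), (Q x, x)#} + {#(Q h, h), (Q x, r), (r, x), (e, r)#}
     = Cp + {#(e,r),(Q x,r),(r,x)#} + pend Q (leaves N - {x})"
    unfolding E1 pe1 pe2 by (simp add: add_mset_commute)
  have res: "head_move_result (stnet Q e h) e r (Q x, x) = stnet Q e x"
    unfolding r1 r2 by (simp add: stnet_def)
  show "head_move X (stnet Q e h) (stnet Q e x)"
    unfolding head_move_def
  proof (intro exI conjI)
    show "(e, r) \<in># arcs (stnet Q e h)" by (simp add: st_arcs)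
    show "r \<in> reticulations (stnet Q e h)" by (rule st_ret[OF v])
    show "(Q x, x) \<in># arcs (stnet Q e h) - {#(e, r)#}"
      using xL finL by (simp add: st_arcs mem_pend)
    show "stnet Q e x = head_move_result (stnet Q e h) e r (Q x, x)" using res by simp
    show "phylo_net X (stnet Q e x)" by (rule st_phylo[OF vx])
  qed
qed

end

lemma card_remove_P: "finite S \<Longrightarrow> h \<in> S \<Longrightarrow>
   card {l\<in>S. P l} = card {l\<in>S - {h}. P l} + (if P h then 1 else 0)"
proof -
  assume f: "finite S" and h: "h \<in> S"
  show ?thesis
  proof (cases "P h")
    case True
    then have "{l\<in>S. P l} = insert h {l\<in>S - {h}. P l}" using h by auto
    then show ?thesis using f True by simp
  next
    case False
    then have "{l\<in>S. P l} = {l\<in>S - {h}. P l}" using h by auto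
    then show ?thesis using False by simp
  qed
qed

locale gadT = gad X N r Cp SL for X :: "'x set" and N :: "('v,'x) pnet" and r Cp SL +
  fixes T :: "'v \<Rightarrow> 'v" and u :: 'v
  assumes TSL: "image_mset T (mset_set (leaves N)) + {#u#} = SL"
begin

definition D :: "('v \<Rightarrow> 'v) \<Rightarrow> nat" where
  "D Q = card {l\<in>leaves N. Q l \<noteq> T l}"

definition nc :: "('v \<Rightarrow> 'v) \<Rightarrow> 'v \<Rightarrow> bool" where
  "nc Q e \<longleftrightarrow> (\<exists>x\<in>leaves N. T x = e \<and> Q x \<noteq> e \<and> Q x \<noteq> u)"

definition Phi :: "('v \<Rightarrow> 'v) \<Rightarrow> 'v \<Rightarrow> nat" where
  "Phi Q e = (if e = u then 2 * D Q else 2 * D Q - 1 - (if nc Q e then 1 else 0))"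

lemma slide:
  assumes v: "valid Q e h" and x: "x \<in> leaves N" "x \<noteq> h" "Q x \<noteq> e"
  shows "head_move X (stnet Q e h) (stnet (Q(x:=e)) (Q x) x)" "valid (Q(x:=e)) (Q x) x"
  using st_move[OF v x] stnet_equiv[OF x(1), of Q e] valid_equiv[of Q e x] by auto

lemma cnt_eq: assumes v: "valid Q e h"
  shows "card {l\<in>leaves N. T l = y} + (if u = y then 1 else 0) = card {l\<in>leaves N. Q l = y} + (if e = y then 1 else 0)"
proof -
  have "image_mset T (mset_set (leaves N)) + {#u#} = image_mset Q (mset_set (leaves N)) + {#e#}"
    using v TSL unfolding valid_def by simp
  then have "count (image_mset T (mset_set (leaves N)) + {#u#}) y = count (image_mset Q (mset_set (leaves N)) + {#e#}) y"
    by simp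
  moreover have "count (image_mset T (mset_set (leaves N)) + {#u#}) y = card {l\<in>leaves N. T l = y} + (if u = y then 1 else 0)"
    using count_image_mset_set[OF finL, of T y] by simp
  moreover have "count (image_mset Q (mset_set (leaves N)) + {#e#}) y = card {l\<in>leaves N. Q l = y} + (if e = y then 1 else 0)"
    using count_image_mset_set[OF finL, of Q y] by simp
  ultimately show ?thesis by simp
qed

lemma exists_cand: assumes v: "valid Q e h" and eu: "e \<noteq> u"
  shows "\<exists>x\<in>leaves N. T x = e \<and> Q x \<noteq> e"
proof (rule ccontr)
  assume "\<not> ?thesis"
  then have "{l\<in>leaves N. T l = e} \<subseteq> {l\<in>leaves N. Q l = e}" by auto
  then have "card {l\<in>leaves N. T l = e} \<le> card {l\<in>leaves N. Q l = e}" using finL by (simp add: card_mono)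
  with cnt_eq[OF v, of e] eu show False by simp
qed

lemma D_upd: assumes x: "x \<in> leaves N"
  shows "D (Q(x:=e)) + (if Q x \<noteq> T x then 1 else 0) = D Q + (if e \<noteq> T x then 1 else 0)"
proof -
  have a: "D Q = card {l\<in>leaves N - {x}. Q l \<noteq> T l} + (if Q x \<noteq> T x then 1 else 0)"
    unfolding D_def by (rule card_remove_P[OF finL x])
  have b: "D (Q(x:=e)) = card {l\<in>leaves N - {x}. (Q(x:=e)) l \<noteq> T l} + (if e \<noteq> T x then 1 else 0)"
    unfolding D_def using card_remove_P[OF finL x, of "\<lambda>l. (Q(x:=e)) l \<noteq> T l"] by simp
  have c: "{l\<in>leaves N - {x}. (Q(x:=e)) l \<noteq> T l} = {l\<in>leaves N - {x}. Q l \<noteq> T l}" by auto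
  show ?thesis using a b c by simp
qed

lemma D_pos: assumes v: "valid Q e h" and eu: "e \<noteq> u" shows "D Q \<ge> 1"
proof -
  obtain x where x: "x \<in> leaves N" "T x = e" "Q x \<noteq> e" using exists_cand[OF v eu] by blast
  then have "x \<in> {l\<in>leaves N. Q l \<noteq> T l}" by auto
  then have "{l\<in>leaves N. Q l \<noteq> T l} \<noteq> {}" by blast
  then show ?thesis unfolding D_def using finL by (simp add: Suc_leI card_gt_0_iff)
qed

lemma D_zero: "D Q = 0 \<Longrightarrow> l \<in> leaves N \<Longrightarrow> Q l = T l"
  unfolding D_def using finL by auto

lemma exists_start:
  assumes v: "valid Q e h" and eu: "e = u" and d: "D Q \<noteq> 0" and J: "T h \<noteq> e"
  shows "\<exists>z\<in>leaves N. z \<noteq> h \<and> Q z \<noteq> T z \<and> Q z \<noteq> u"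
proof (rule ccontr)
  assume A: "\<not> ?thesis"
  have hL: "h \<in> leaves N" and Qh: "Q h \<noteq> u" using v eu unfolding valid_def by auto
  have sub: "{l\<in>leaves N. T l = u} \<subseteq> {l\<in>leaves N. Q l = u}"
  proof
    fix y assume y: "y \<in> {l\<in>leaves N. T l = u}"
    then have "y \<noteq> h" using J eu by auto
    then show "y \<in> {l\<in>leaves N. Q l = u}" using A y by auto
  qed
  have ce: "card {l\<in>leaves N. T l = u} = card {l\<in>leaves N. Q l = u}" using cnt_eq[OF v, of u] eu by simp
  have eqs: "{l\<in>leaves N. T l = u} = {l\<in>leaves N. Q l = u}"
    by (rule card_subset_eq[OF _ sub ce]) (use finL in auto)
  have others: "\<forall>z\<in>leaves N. z \<noteq> h \<longrightarrow> Q z = T z"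
  proof (intro ballI impI)
    fix z assume z: "z \<in> leaves N" "z \<noteq> h"
    show "Q z = T z"
    proof (rule ccontr)
      assume "Q z \<noteq> T z"
      then have "Q z = u" using A z by auto
      then have "T z = u" using eqs z by blast
      with \<open>Q z = u\<close> \<open>Q z \<noteq> T z\<close> show False by simp
    qed
  qed
  have m: "mset_set (leaves N) = add_mset h (mset_set (leaves N - {h}))"
    using finL hL by (simp add: mset_set.remove)
  have i: "image_mset Q (mset_set (leaves N - {h})) = image_mset T (mset_set (leaves N - {h}))"
    using others finL by (auto intro!: image_mset_cong)
  have "image_mset T (mset_set (leaves N)) + {#u#} = image_mset Q (mset_set (leaves N)) + {#u#}"
    using v TSL eu unfolding valid_def by simp
  then have "image_mset T (mset_set (leaves N)) = image_mset Q (mset_set (leaves N))"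
    by (simp only: add_right_cancel)
  then have "add_mset (T h) (image_mset T (mset_set (leaves N - {h}))) = add_mset (Q h) (image_mset T (mset_set (leaves N - {h})))"
    by (subst (asm) m, subst (asm) m) (simp add: i)
  then have "Q h = T h" by simp
  with others have "\<forall>z\<in>leaves N. Q z = T z" by auto
  then have "{l\<in>leaves N. Q l \<noteq> T l} = {}" by auto
  then have "D Q = 0" unfolding D_def by (simp only: card.empty)
  with d show False by simp
qed

lemma core:
  "\<forall>Q e h. D Q = d \<longrightarrow> valid Q e h \<longrightarrow> T h \<noteq> e \<longrightarrow>
     (\<exists>k h'. k \<le> Phi Q e \<and> (head_move X ^^ k) (stnet Q e h) (stnet T u h') \<and> valid T u h')"
proof (induction d rule: less_induct)
  case (less d)
  have neq: "\<exists>k h'. k \<le> Phi Q e \<and> (head_move X ^^ k) (stnet Q e h) (stnet T u h') \<and> valid T u h'"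
    if dq: "D Q = d" and v: "valid Q e h" and J: "T h \<noteq> e" and eu: "e \<noteq> u" for Q e h
  proof -
    have d1: "d \<ge> 1" using D_pos[OF v eu] dq by simp
    obtain x where x: "x \<in> leaves N" "T x = e" "Q x \<noteq> e"
      and xu: "if nc Q e then Q x \<noteq> u else Q x = u"
    proof (cases "nc Q e")
      case True
      then obtain x where "x \<in> leaves N" "T x = e" "Q x \<noteq> e" "Q x \<noteq> u" unfolding nc_def by blast
      then show ?thesis using that True by auto
    next
      case False
      obtain x where x: "x \<in> leaves N" "T x = e" "Q x \<noteq> e" using exists_cand[OF v eu] by blast
      then have "Q x = u" using False unfolding nc_def by blast
      then show ?thesis using that x False by auto
    qed
    have xh: "x \<noteq> h" using x J by auto
    note sl = slide[OF v x(1) xh x(3)]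
    have J': "T x \<noteq> Q x" using x by auto
    have D': "D (Q(x:=e)) + 1 = d" using D_upd[OF x(1), of Q e] x dq by auto
    then have lt: "D (Q(x:=e)) < d" by simp
    obtain k' h' where k': "k' \<le> Phi (Q(x:=e)) (Q x)"
      "(head_move X ^^ k') (stnet (Q(x:=e)) (Q x) x) (stnet T u h')" "valid T u h'"
      using less.IH[OF lt] sl(2) J' by blast
    have path: "(head_move X ^^ Suc k') (stnet Q e h) (stnet T u h')"
      by (rule relpowp_Suc_I2[OF sl(1) k'(2)])
    have bound: "Suc k' \<le> Phi Q e"
    proof (cases "nc Q e")
      case True
      then have qu: "Q x \<noteq> u" using xu by simp
      have "D (Q(x:=e)) \<ge> 1" using D_pos[OF sl(2) qu] .
      then show ?thesis using k'(1) True qu eu D' dq unfolding Phi_def by auto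
    next
      case False
      then have qu: "Q x = u" using xu by simp
      then show ?thesis using k'(1) False eu D' dq d1 unfolding Phi_def by auto
    qed
    show ?thesis using path bound k'(3) by blast
  qed
  show ?case
  proof (intro allI impI)
    fix Q e h assume dq: "D Q = d" and v: "valid Q e h" and J: "T h \<noteq> e"
    show "\<exists>k h'. k \<le> Phi Q e \<and> (head_move X ^^ k) (stnet Q e h) (stnet T u h') \<and> valid T u h'"
    proof (cases "e = u")
      case False
      then show ?thesis using neq[OF dq v J] by blast
    next
      case eu: True
      show ?thesis
      proof (cases "d = 0")
        case True
        have hL: "h \<in> leaves N" using v unfolding valid_def by simp
        have QT: "\<And>l. l \<in> leaves N \<Longrightarrow> Q l = T l" using D_zero dq True by blast
        have "stnet Q e h = stnet T u h" using stnet_cong[OF hL QT] eu by simp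
        moreover have "valid T u h" using valid_cong[of Q T e h] QT v eu by simp
        ultimately show ?thesis by (intro exI[of _ 0] exI[of _ h]) auto
      next
        case False
        obtain z where z: "z \<in> leaves N" "z \<noteq> h" "Q z \<noteq> T z" "Q z \<noteq> u"
          using exists_start[OF v eu _ J] False dq by blast
        have ze: "Q z \<noteq> e" using z eu by simp
        note sl = slide[OF v z(1) z(2) ze]
        have J': "T z \<noteq> Q z" using z by auto
        have D': "D (Q(z:=e)) + 1 = d + (if e \<noteq> T z then 1 else 0)"
          using D_upd[OF z(1), of Q e] z dq by auto
        have D1: "D (Q(z:=e)) \<ge> 1" using D_pos[OF sl(2) z(4)] .
        obtain k' h' where k': "k' \<le> Phi (Q(z:=e)) (Q z)"
          "(head_move X ^^ k') (stnet (Q(z:=e)) (Q z) z) (stnet T u h')" "valid T u h'"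
        proof (cases "D (Q(z:=e)) < d")
          case True
          then show ?thesis using less.IH[OF True] sl(2) J' that by blast
        next
          case False
          then have "D (Q(z:=e)) = d" using D' by (auto split: if_splits)
          then show ?thesis using neq[OF _ sl(2) J' z(4)] that by blast
        qed
        have path: "(head_move X ^^ Suc k') (stnet Q e h) (stnet T u h')"
          by (rule relpowp_Suc_I2[OF sl(1) k'(2)])
        have "D (Q(z:=e)) \<le> d" using D' by (auto split: if_splits)
        then have "Suc k' \<le> Phi Q e" using k'(1) eu z(4) D1 dq unfolding Phi_def by auto
        then show ?thesis using path k'(3) by blast
      qed
    qed
  qed
qed

end

lemma deg_transport:
  assumes inj: "inj_on g V" and E: "\<forall>e\<in>#E. fst e \<in> V \<and> snd e \<in> V" and x: "x \<in> V"
  shows "indeg (image_mset (map_prod g g) E) (g x) = indeg E x"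
    "outdeg (image_mset (map_prod g g) E) (g x) = outdeg E x"
proof -
  have "filter_mset (\<lambda>e. g (snd e) = g x) E = filter_mset (\<lambda>e. snd e = x) E"
    by (rule filter_mset_cong) (use inj E x in \<open>auto simp: inj_on_def\<close>)
  then show "indeg (image_mset (map_prod g g) E) (g x) = indeg E x"
    unfolding indeg_def by (simp add: filter_mset_image_mset map_prod_def case_prod_beta)
  have "filter_mset (\<lambda>e. g (fst e) = g x) E = filter_mset (\<lambda>e. fst e = x) E"
    by (rule filter_mset_cong) (use inj E x in \<open>auto simp: inj_on_def\<close>)
  then show "outdeg (image_mset (map_prod g g) E) (g x) = outdeg E x"
    unfolding outdeg_def by (simp add: filter_mset_image_mset map_prod_def case_prod_beta)
qed

lemma leaves_iso:
  assumes b: "bij_betw g (nodes N) (nodes M)" and a: "image_mset (map_prod g g) (arcs N) = arcs M"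
    and E: "\<forall>e\<in>#arcs N. fst e \<in> nodes N \<and> snd e \<in> nodes N"
  shows "leaves M = g ` leaves N"
proof -
  have inj: "inj_on g (nodes N)" using b by (simp add: bij_betw_def)
  note dt = deg_transport[OF inj E, unfolded a]
  show ?thesis
  proof
    show "g ` leaves N \<subseteq> leaves M"
      using dt b unfolding leaves_def bij_betw_def by auto
    show "leaves M \<subseteq> g ` leaves N"
    proof
      fix y assume y: "y \<in> leaves M"
      then obtain x where x: "x \<in> nodes N" "y = g x" using b unfolding leaves_def bij_betw_def by auto
      then have "x \<in> leaves N" using y dt[of x] unfolding leaves_def by auto
      then show "y \<in> g ` leaves N" using x by auto
    qed
  qed
qed

lemma phylo_ends: "phylo_net X N \<Longrightarrow> \<forall>e\<in>#arcs N. fst e \<in> nodes N \<and> snd e \<in> nodes N"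
  unfolding phylo_net_def by blast
lemma phylo_cnt: "phylo_net X N \<Longrightarrow> count (arcs N) e \<le> 1"
  unfolding phylo_net_def by blast
lemma phylo_acyc: "phylo_net X N \<Longrightarrow> acyclic (set_mset (arcs N))"
  unfolding phylo_net_def by blast
lemma phylo_tail_nl: "phylo_net X N \<Longrightarrow> p \<in># arcs N \<Longrightarrow> fst p \<notin> leaves N"
proof
  assume ph: "phylo_net X N" and p: "p \<in># arcs N" and l: "fst p \<in> leaves N"
  have "p \<in># filter_mset (\<lambda>e. fst e = fst p) (arcs N)" using p by simp
  then have "outdeg (arcs N) (fst p) \<noteq> 0" unfolding outdeg_def by (metis empty_iff set_mset_empty size_eq_0_iff_empty)
  with l show False unfolding leaves_def by simp
qed

lemma pend_swap:
  assumes ph: "phylo_net X N" and A: "arcs N = B + pend P (leaves N)"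
    and Bh: "\<forall>p\<in>#B. snd p \<notin> leaves N"
    and im: "image_mset T (mset_set (leaves N)) = image_mset P (mset_set (leaves N))"
    and Tv: "\<forall>l\<in>leaves N. T l \<in> nodes N \<and> T l \<notin> leaves N"
  shows "phylo_net X (N\<lparr>arcs := B + pend T (leaves N)\<rparr>)"
    "leaves (N\<lparr>arcs := B + pend T (leaves N)\<rparr>) = leaves N"
proof -
  have finL: "finite (leaves N)" by (rule finite_leaves[OF ph])
  have Lsub: "leaves N \<subseteq> nodes N" unfolding leaves_def by auto
  have Bsub: "p \<in># B \<Longrightarrow> p \<in># arcs N" for p using A by simp
  have cntB: "count B p \<le> count (arcs N) p" for p using A by simp
  have ind: "indeg (arcs (N\<lparr>arcs := B + pend T (leaves N)\<rparr>)) x = indeg (arcs N) x" for x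
      using A by (simp add: indeg_pend finL)
  have outd: "outdeg (arcs (N\<lparr>arcs := B + pend T (leaves N)\<rparr>)) x = outdeg (arcs N) x" for x
  proof -
    have "card {l\<in>leaves N. T l = x} = card {l\<in>leaves N. P l = x}"
      using im count_image_mset_set[OF finL, of T x] count_image_mset_set[OF finL, of P x] by simp
    then show ?thesis using A by (simp add: outdeg_pend finL)
  qed
  show "leaves (N\<lparr>arcs := B + pend T (leaves N)\<rparr>) = leaves N"
    apply (subst leaves_def[of "N\<lparr>arcs := B + pend T (leaves N)\<rparr>"])
    apply (simp only: ind outd)
    apply (simp add: leaves_def)
    done
  show "phylo_net X (N\<lparr>arcs := B + pend T (leaves N)\<rparr>)"
  proof (rule phylo_transfer[OF ph])
    show "indeg (arcs (N\<lparr>arcs := B + pend T (leaves N)\<rparr>)) x = indeg (arcs N) x" for x by (rule ind)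
    show "outdeg (arcs (N\<lparr>arcs := B + pend T (leaves N)\<rparr>)) x = outdeg (arcs N) x" for x by (rule outd)
    show "\<forall>e\<in>#arcs (N\<lparr>arcs := B + pend T (leaves N)\<rparr>). fst e \<in> nodes N \<and> snd e \<in> nodes N"
      using phylo_ends[OF ph] Bsub Tv Lsub by (auto simp: mem_pend finL)
    show "\<forall>e. count (arcs (N\<lparr>arcs := B + pend T (leaves N)\<rparr>)) e \<le> 1"
    proof
      fix e show "count (arcs (N\<lparr>arcs := B + pend T (leaves N)\<rparr>)) e \<le> 1"
      proof (cases e)
        case (Pair a b)
        show ?thesis
        proof (cases "b \<in> leaves N")
          case True
          then have "count B e = 0" using Bh Pair by (auto simp: not_in_iff[symmetric])
          then show ?thesis using Pair finL by (simp add: count_pend)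
        next
          case False
          then show ?thesis using Pair finL cntB[of e] phylo_cnt[OF ph, of e] by (simp add: count_pend)
        qed
      qed
    qed
    show "acyclic (set_mset (arcs (N\<lparr>arcs := B + pend T (leaves N)\<rparr>)))"
    proof (rule acyclic_sink[of "set_mset B" _ "leaves N"])
      show "acyclic (set_mset B)"
        by (rule acyclic_subset[OF phylo_acyc[OF ph]]) (use Bsub in auto)
      show "set_mset (arcs (N\<lparr>arcs := B + pend T (leaves N)\<rparr>)) \<subseteq> set_mset B \<union> {p. snd p \<in> leaves N}"
        using finL by (auto simp: mem_pend)
      show "\<forall>p\<in>set_mset (arcs (N\<lparr>arcs := B + pend T (leaves N)\<rparr>)). fst p \<notin> leaves N"
      proof
        fix p assume "p \<in> set_mset (arcs (N\<lparr>arcs := B + pend T (leaves N)\<rparr>))"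
        then have "p \<in># B \<or> p \<in># pend T (leaves N)" by simp
        then show "fst p \<notin> leaves N"
        proof
          assume "p \<in># B" then show ?thesis using Bsub phylo_tail_nl[OF ph] by blast
        qed (use finL Tv in \<open>auto simp: mem_pend\<close>)
      qed
    qed
  qed simp_all
qed

lemma reindex:
  assumes inj: "inj_on g L" and gL: "g ` L = L" and S: "S \<subseteq> L" and fin: "finite L"
    and Pv: "\<forall>l\<in>S. P l \<notin> L" and gid: "\<forall>x. x \<notin> L \<longrightarrow> g x = x"
  shows "image_mset (map_prod g g) (pend P S) = pend (P \<circ> inv_into L g) (g ` S)"
proof -
  have finS: "finite S" using S fin by (rule finite_subset)
  have injS: "inj_on g S" using inj S by (rule inj_on_subset)
  have "image_mset (map_prod g g) (pend P S) = image_mset (\<lambda>l. (P l, g l)) (mset_set S)"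
    unfolding pend_def image_mset.compositionality
    by (rule image_mset_cong) (use Pv gid finS in auto)
  also have "\<dots> = image_mset (\<lambda>m. (P (inv_into L g m), m)) (image_mset g (mset_set S))"
    unfolding image_mset.compositionality
    by (rule image_mset_cong) (use inj S finS in \<open>auto simp: inv_into_f_f\<close>)
  also have "image_mset g (mset_set S) = mset_set (g ` S)" using injS by (rule image_mset_mset_set)
  finally show ?thesis unfolding pend_def by (simp add: comp_def)
qed

lemma lab_iso_final:
  assumes b: "bij_betw \<phi> (nodes N) (nodes N')" and a: "image_mset (map_prod \<phi> \<phi>) (arcs N) = arcs N'"
    and E: "\<forall>e\<in>#arcs N. fst e \<in> nodes N \<and> snd e \<in> nodes N"
    and g: "bij_betw g (nodes N) (nodes N)" "\<forall>x\<in>leaves N. lab N (g x) = lab N' (\<phi> x)"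
      "g ` leaves N = leaves N"
    and F: "nodes F = nodes N" "lab F = lab N" "arcs F = image_mset (map_prod g g) (arcs N)"
      "leaves F = leaves N"
  shows "labelled_iso F N'"
proof -
  define \<psi> where "\<psi> = \<phi> \<circ> inv_into (nodes N) g"
  have injg: "inj_on g (nodes N)" using g(1) by (simp add: bij_betw_def)
  have Ln: "leaves N \<subseteq> nodes N" unfolding leaves_def by auto
  have bp: "bij_betw \<psi> (nodes F) (nodes N')"
    unfolding \<psi>_def F(1) by (rule bij_betw_trans[OF bij_betw_inv_into[OF g(1)] b])
  have ar: "image_mset (map_prod \<psi> \<psi>) (arcs F) = arcs N'"
  proof -
    have "image_mset (map_prod \<psi> \<psi>) (arcs F) = image_mset (map_prod \<psi> \<psi> \<circ> map_prod g g) (arcs N)"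
      unfolding F(3) image_mset.compositionality ..
    also have "\<dots> = image_mset (map_prod \<phi> \<phi>) (arcs N)"
      by (rule image_mset_cong) (use E injg in \<open>auto simp: \<psi>_def inv_into_f_f\<close>)
    finally show ?thesis using a by simp
  qed
  have lb: "\<forall>x\<in>leaves F. lab N' (\<psi> x) = lab F x"
  proof
    fix x assume "x \<in> leaves F"
    then have x: "x \<in> leaves N" using F(4) by simp
    then have "x \<in> g ` leaves N" using g(3) by simp
    then obtain m where m: "m \<in> leaves N" "g m = x" by (auto simp: image_iff)
    have "inv_into (nodes N) g (g m) = m" by (rule inv_into_f_f[OF injg]) (use m Ln in auto)
    then have "inv_into (nodes N) g x = m" using m(2) by simp
    moreover have "lab N (g m) = lab N' (\<phi> m)" using g(2) m(1) by blast
    ultimately show "lab N' (\<psi> x) = lab F x" using m F(2) by (simp add: \<psi>_def)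
  qed
  show ?thesis unfolding labelled_iso_def using bp ar lb by blast
qed

lemma size2: "size M = 2 \<Longrightarrow> \<exists>a b. M = {#a, b#}"
proof -
  assume "size M = 2"
  then obtain a M' where M: "M = add_mset a M'" "size M' = 1"
    by (metis Suc_1 size_eq_Suc_imp_eq_union add_mset_add_single diff_Suc_1 size_add_mset)
  then obtain b where "M' = {#b#}" using size_1_singleton_mset by blast
  then show ?thesis using M by auto
qed

lemma no_loop: "phylo_net X N \<Longrightarrow> (x, x) \<notin># arcs N"
  using phylo_acyc[of X N] unfolding acyclic_def by auto

lemma ret_struct:
  assumes ph: "phylo_net X N" and r: "r \<in> reticulations N"
  shows "\<exists>u w c. u \<noteq> w \<and> filter_mset (\<lambda>e. snd e = r) (arcs N) = {#(u,r),(w,r)#}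
           \<and> filter_mset (\<lambda>e. fst e = r) (arcs N) = {#(r,c)#}"
proof -
  have "size (filter_mset (\<lambda>e. snd e = r) (arcs N)) = 2" using r unfolding reticulations_def indeg_def by simp
  then obtain a b where ab: "filter_mset (\<lambda>e. snd e = r) (arcs N) = {#a, b#}" using size2 by blast
  have "a \<in># filter_mset (\<lambda>e. snd e = r) (arcs N)" "b \<in># filter_mset (\<lambda>e. snd e = r) (arcs N)"
    using ab by auto
  then have sa: "snd a = r" "snd b = r" by auto
  have "a \<noteq> b"
  proof
    assume "a = b"
    then have "count (filter_mset (\<lambda>e. snd e = r) (arcs N)) a = 2" using ab by simp
    then have "count (arcs N) a \<ge> 2" by (metis count_filter_mset le_refl zero_neq_numeral)
    with phylo_cnt[OF ph, of a] show False by simp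
  qed
  then have ne: "fst a \<noteq> fst b" using sa by (metis prod.expand)
  have "size (filter_mset (\<lambda>e. fst e = r) (arcs N)) = 1" using r unfolding reticulations_def outdeg_def by simp
  then obtain d where d: "filter_mset (\<lambda>e. fst e = r) (arcs N) = {#d#}" using size_1_singleton_mset by blast
  then have "d \<in># filter_mset (\<lambda>e. fst e = r) (arcs N)" by simp
  then have "fst d = r" by simp
  then have "d = (r, snd d)" by (metis prod.collapse)
  moreover have "a = (fst a, r)" "b = (fst b, r)" using sa by (metis prod.collapse)+
  ultimately show ?thesis using ab d ne by metis
qed

lemma leaf_parent:
  assumes ph: "phylo_net X N" and l: "l \<in> leaves N"
  shows "\<exists>p. filter_mset (\<lambda>e. snd e = l) (arcs N) = {#(p,l)#}"
proof -
  have "size (filter_mset (\<lambda>e. snd e = l) (arcs N)) = 1" using l unfolding leaves_def indeg_def by simp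
  then obtain d where d: "filter_mset (\<lambda>e. snd e = l) (arcs N) = {#d#}" using size_1_singleton_mset by blast
  then have "d \<in># filter_mset (\<lambda>e. snd e = l) (arcs N)" by simp
  then have "snd d = l" by simp
  then have "d = (fst d, l)" by (metis prod.collapse)
  then show ?thesis using d by metis
qed

definition par :: "('v,'x) pnet \<Rightarrow> 'v \<Rightarrow> 'v" where
  "par N l = (THE p. (p, l) \<in># arcs N)"

lemma par_filter:
  assumes ph: "phylo_net X N" and l: "l \<in> leaves N"
  shows "filter_mset (\<lambda>e. snd e = l) (arcs N) = {#(par N l, l)#}"
proof -
  obtain p where p: "filter_mset (\<lambda>e. snd e = l) (arcs N) = {#(p,l)#}" using leaf_parent[OF ph l] by blast
  have mem: "(q, l) \<in># arcs N \<longleftrightarrow> q = p" for q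
  proof -
    have "(q, l) \<in># arcs N \<longleftrightarrow> (q, l) \<in># filter_mset (\<lambda>e. snd e = l) (arcs N)" by simp
    also have "\<dots> \<longleftrightarrow> q = p" unfolding p by simp
    finally show ?thesis .
  qed
  have "par N l = p" unfolding par_def using mem by blast
  then show ?thesis using p by simp
qed

lemma count_leaf_arc:
  assumes ph: "phylo_net X N" and l: "l \<in> leaves N"
  shows "count (arcs N) (a, l) = (if a = par N l then 1 else 0)"
proof -
  have "count (arcs N) (a, l) = count (filter_mset (\<lambda>e. snd e = l) (arcs N)) (a, l)" by simp
  also have "\<dots> = (if a = par N l then 1 else 0)" unfolding par_filter[OF ph l] by simp
  finally show ?thesis .
qed

lemma decomp:
  fixes N :: "('v,'x) pnet"
  assumes ph: "phylo_net X N"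
    and fr: "filter_mset (\<lambda>e. snd e = r) (arcs N) = {#(u,r),(w,r)#}"
    and fc: "filter_mset (\<lambda>e. fst e = r) (arcs N) = {#(r,c)#}"
    and rL: "r \<notin> leaves N"
  shows "arcs N = filter_mset (\<lambda>p. snd p \<notin> leaves N \<and> snd p \<noteq> r \<and> fst p \<noteq> r) (arcs N)
           + {#(u,r),(w,r),(r,c)#} + pend (par N) (leaves N - {c})"
proof (rule multiset_eqI)
  fix p :: "'v \<times> 'v"
  obtain a b where p: "p = (a, b)" by (cases p)
  have finL: "finite (leaves N)" by (rule finite_leaves[OF ph])
  have cr: "c \<noteq> r"
  proof
    assume "c = r"
    have "(r, c) \<in># filter_mset (\<lambda>e. fst e = r) (arcs N)" using fc by simp
    then have "(r, r) \<in># arcs N" using \<open>c = r\<close> by simp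
    with no_loop[OF ph] show False by blast
  qed
  have cntr: "count (arcs N) (x, r) = count {#(u,r),(w,r)#} (x, r)" for x
    using arg_cong[OF fr, of "\<lambda>M. count M (x, r)"] by simp
  have cntc: "count (arcs N) (r, y) = count {#(r,c)#} (r, y)" for y
    using arg_cong[OF fc, of "\<lambda>M. count M (r, y)"] by simp
  show "count (arcs N) p = count (filter_mset (\<lambda>p. snd p \<notin> leaves N \<and> snd p \<noteq> r \<and> fst p \<noteq> r) (arcs N)
           + {#(u,r),(w,r),(r,c)#} + pend (par N) (leaves N - {c})) p"
  proof (cases "b = r")
    case True
    then show ?thesis using p cntr[of a] cr rL finL by (simp add: count_pend)
  next
    case bnr: False
    show ?thesis
    proof (cases "a = r")
      case True
      have "count (pend (par N) (leaves N - {c})) (r, b) = 0"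
      proof (rule ccontr)
        assume "count (pend (par N) (leaves N - {c})) (r, b) \<noteq> 0"
        then have b: "b \<in> leaves N" "b \<noteq> c" "r = par N b" using finL by (auto simp: count_pend split: if_splits)
        then have "count (arcs N) (r, b) = 1" using count_leaf_arc[OF ph b(1), of r] by simp
        with cntc[of b] b(2) show False by simp
      qed
      then show ?thesis using p True bnr cntc[of b] by auto
    next
      case anr: False
      show ?thesis
      proof (cases "b \<in> leaves N")
        case True
        have "count (arcs N) (a, b) = (if a = par N b then 1 else 0)" by (rule count_leaf_arc[OF ph True])
        moreover have "b = c \<Longrightarrow> par N b = r"
        proof -
          assume "b = c"
          have "(r, c) \<in># arcs N" using arg_cong[OF fc, of set_mset] by auto
          then have "count (arcs N) (r, b) \<noteq> 0" using \<open>b = c\<close> by simp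
          then show "par N b = r" using count_leaf_arc[OF ph True, of r] by (simp split: if_splits)
        qed
        ultimately show ?thesis using p True anr bnr finL by (auto simp: count_pend)
      next
        case False
        then show ?thesis using p anr bnr finL by (simp add: count_pend)
      qed
    qed
  qed
qed

lemma three_parents:
  assumes ph: "phylo_net X N" and a: "(a,c) \<in># arcs N" "(b,c) \<in># arcs N" "(r,c) \<in># arcs N"
    and d: "a \<noteq> b" "a \<noteq> r" "b \<noteq> r"
  shows False
proof -
  have cn: "c \<in> nodes N" using phylo_ends[OF ph] a(1) by fastforce
  then have "indeg (arcs N) c \<le> 2" using ph unfolding phylo_net_def by fastforce
  moreover have "{#(a,c),(b,c),(r,c)#} \<subseteq># filter_mset (\<lambda>e. snd e = c) (arcs N)"
  proof (rule mset_subset_eqI)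
    fix t
    show "count {#(a,c),(b,c),(r,c)#} t \<le> count (filter_mset (\<lambda>e. snd e = c) (arcs N)) t"
      using a d by (auto simp: count_inI)
  qed
  then have "size {#(a,c),(b,c),(r,c)#} \<le> indeg (arcs N) c" unfolding indeg_def by (rule size_mset_mono)
  ultimately show False by simp
qed

context gadT begin

lemma D_le: "D Q \<le> card (leaves N)"
  unfolding D_def using finL by (intro card_mono) auto

lemma D_le1: assumes "c \<in> leaves N" "Q c = T c" shows "D Q + 1 \<le> card (leaves N)"
proof -
  have "{l\<in>leaves N. Q l \<noteq> T l} \<subseteq> leaves N - {c}" using assms by auto
  then have "D Q \<le> card (leaves N - {c})" unfolding D_def using finL by (intro card_mono) auto
  moreover have "card (leaves N - {c}) = card (leaves N) - 1" using assms(1) finL by (simp add: card_Diff_singleton)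
  moreover have "card (leaves N) > 0" using card_gt_0_iff[of "leaves N"] finL assms(1) by blast
  ultimately show ?thesis by linarith
qed

lemma choose_x1:
  assumes P: "image_mset P (mset_set (leaves N)) + {#u#} = SL" and d: "D P \<noteq> 0"
    and cu: "card {l\<in>leaves N. P l = u} \<le> 1" and c2: "card (leaves N) \<ge> 2"
  shows "\<exists>x1\<in>leaves N. P x1 \<noteq> T x1 \<and> P x1 \<noteq> u \<and> (D (P(x1:=u)) + 1 \<le> card (leaves N) \<or> nc (P(x1:=u)) (P x1))"
proof -
  have imTP: "image_mset T (mset_set (leaves N)) = image_mset P (mset_set (leaves N))"
    using P TSL by (metis add_right_cancel)
  have cntTP: "card {l\<in>leaves N. T l = y} = card {l\<in>leaves N. P l = y}" for y
    using arg_cong[OF imTP, of "\<lambda>M. count M y"] count_image_mset_set[OF finL, of T y]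
      count_image_mset_set[OF finL, of P y] by simp
  show ?thesis
  proof (cases "\<exists>x1\<in>leaves N. P x1 \<noteq> u \<and> T x1 = u")
    case True
    then obtain x1 where x1: "x1 \<in> leaves N" "P x1 \<noteq> u" "T x1 = u" by blast
    have "D (P(x1:=u)) + 1 = D P" using D_upd[OF x1(1), of P u] x1 by simp
    then show ?thesis using x1 D_le[of P] by auto
  next
    case False
    then have ii: "\<forall>x\<in>leaves N. P x \<noteq> u \<longrightarrow> T x \<noteq> u" by blast
    have mis_nu: "P z \<noteq> u" if z: "z \<in> leaves N" "P z \<noteq> T z" for z
    proof
      assume Pz: "P z = u"
      have sub: "{l\<in>leaves N. T l = u} \<subseteq> {l\<in>leaves N. P l = u}" using ii by auto
      have "{l\<in>leaves N. T l = u} = {l\<in>leaves N. P l = u}"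
        by (rule card_subset_eq[OF _ sub cntTP[of u]]) (use finL in auto)
      then have "T z = u" using z Pz by blast
      with Pz z show False by simp
    qed
    have Dupd: "D (P(x:=u)) = D P" if "x \<in> leaves N" "P x \<noteq> T x" for x
      using D_upd[OF that(1), of P u] that ii mis_nu[OF that] by auto
    show ?thesis
    proof (cases "D P + 1 \<le> card (leaves N)")
      case True
      obtain z where z: "z \<in> leaves N" "P z \<noteq> T z"
        using d unfolding D_def by (metis (mono_tags, lifting) Collect_empty_eq card.empty)
      then show ?thesis using True Dupd[OF z] mis_nu[OF z] by auto
    next
      case False
      then have Dn: "D P = card (leaves N)" using D_le[of P] by simp
      have allmis: "\<forall>l\<in>leaves N. P l \<noteq> T l"
      proof -
        have "{l\<in>leaves N. P l \<noteq> T l} = leaves N"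
          by (rule card_subset_eq) (use finL Dn in \<open>auto simp: D_def\<close>)
        then show ?thesis by blast
      qed
      have "leaves N \<noteq> {l\<in>leaves N. P l = u}"
      proof
        assume "leaves N = {l\<in>leaves N. P l = u}"
        then have "card (leaves N) \<le> 1" using cu by simp
        with c2 show False by simp
      qed
      then obtain x where x: "x \<in> leaves N" "P x \<noteq> u" by blast
      have Tx: "T x \<noteq> u" using ii x by blast
      have "T x \<in># image_mset T (mset_set (leaves N))" using x finL by simp
      then have "T x \<in># image_mset P (mset_set (leaves N))" using imTP by simp
      then obtain x1 where x1: "x1 \<in> leaves N" "P x1 = T x" using finL by auto
      have x1u: "P x1 \<noteq> u" using x1 Tx by simp
      have xx1: "x \<noteq> x1" using x1 allmis x by auto
      have "nc (P(x1:=u)) (P x1)"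
        unfolding nc_def using x x1 xx1 allmis by (intro bexI[of _ x]) auto
      moreover have "P x1 \<noteq> T x1" using allmis x1(1) by blast
      ultimately show ?thesis using x1(1) x1u by blast
    qed
  qed
qed

end

context gad begin

lemma indeg_Cp_zero_r: "indeg Cp r = 0" by (rule indeg_zero) (use Cp_arcs in auto)

lemma N_ret: "r \<in> reticulations N"
proof -
  have "count SL r = 0" using SL_ok by (auto simp: not_in_iff[symmetric])
  moreover have "outdeg Cp r = 0" by (rule outdeg_zero) (use Cp_arcs in auto)
  ultimately show ?thesis unfolding reticulations_def using inN[of r] outN[of r] indeg_Cp_zero_r r_node r_nl
    by simp
qed

lemma phase_in:
  assumes A: "arcs N = C0 + {#(u,r),(w,r),(r,c)#} + pend P (leaves N)" and Cp: "Cp = C0 + {#(w,c)#}"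
    and v: "valid P u x1" and cL: "c \<notin> leaves N" and wr: "w \<noteq> r" and cr: "c \<noteq> r"
  shows "head_move X N (stnet P u x1)"
proof -
  note vf = valid_facts[OF v]
  have C0in: "p \<in># C0 \<Longrightarrow> p \<in># Cp" for p using Cp by simp
  define E1 where "E1 = arcs N - {#(u,r)#}"
  have E1: "E1 = C0 + {#(w,r),(r,c)#} + pend P (leaves N)" by (simp add: E1_def A)
  have wth: "(THE w'. (w', r) \<in># E1) = w"
  proof (rule the_equality)
    show "(w, r) \<in># E1" by (simp add: E1)
    fix w' assume "(w', r) \<in># E1"
    then show "w' = w" using cr r_nl finL by (auto simp: E1 mem_pend dest!: C0in Cp_in)
  qed
  have cth: "(THE c'. (r, c') \<in># E1) = c"
  proof (rule the_equality)
    show "(r, c) \<in># E1" by (simp add: E1)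
    fix c' assume "(r, c') \<in># E1"
    then show "c' = c" using wr vf finL by (auto simp: E1 mem_pend dest!: C0in Cp_in)
  qed
  have x1L: "x1 \<in> leaves N" using vf by simp
  have nf: "\<not> ((P x1, x1) = (w, r) \<or> (P x1, x1) = (r, c))" using x1L r_nl cL by auto
  define P0 where "P0 = pend P (leaves N - {x1})"
  have pe: "pend P (leaves N) = add_mset (P x1, x1) P0"
    unfolding P0_def by (rule pend_remove[OF finL x1L])
  have r1: "head_move_result N u r (P x1, x1) = N\<lparr>arcs :=
     E1 - {#(w, r), (r, c), (P x1, x1)#} + {#(w, c), (P x1, r), (r, x1), (u, r)#}\<rparr>"
    unfolding head_move_result_def Let_def E1_def[symmetric] wth cth
    by (subst if_not_P[OF nf]) (simp only: fst_conv snd_conv)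
  have r2: "E1 - {#(w, r), (r, c), (P x1, x1)#} + {#(w, c), (P x1, r), (r, x1), (u, r)#}
     = Cp + {#(u,r),(P x1,r),(r,x1)#} + pend P (leaves N - {x1})"
    unfolding E1 pe Cp P0_def[symmetric] by (simp add: add_mset_commute)
  have res: "head_move_result N u r (P x1, x1) = stnet P u x1"
    unfolding r1 r2 by (simp add: stnet_def)
  show ?thesis unfolding head_move_def
  proof (intro exI conjI)
    show "(u, r) \<in># arcs N" by (simp add: A)
    show "r \<in> reticulations N" by (rule N_ret)
    show "(P x1, x1) \<in># arcs N - {#(u, r)#}" using x1L finL by (simp add: A mem_pend)
    show "stnet P u x1 = head_move_result N u r (P x1, x1)" using res by simp
    show "phylo_net X (stnet P u x1)" by (rule st_phylo[OF v])
  qed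
qed

lemma phase_out:
  assumes Cp: "Cp = C0 + {#(w,c)#}" and v: "valid P u h" and wr: "w \<noteq> r" and cr: "c \<noteq> r"
    and cL: "c \<notin> leaves N"
    and F: "F = N\<lparr>arcs := C0 + {#(u,r),(w,r),(r,c)#} + pend P (leaves N)\<rparr>" and phF: "phylo_net X F"
  shows "head_move X (stnet P u h) F"
proof -
  note vf = valid_facts[OF v]
  have C0in: "p \<in># C0 \<Longrightarrow> p \<in># Cp" for p using Cp by simp
  define E1 where "E1 = arcs (stnet P u h) - {#(u,r)#}"
  have E1: "E1 = C0 + {#(w,c)#} + {#(P h,r),(r,h)#} + pend P (leaves N - {h})"
    unfolding E1_def st_arcs by (simp add: Cp)
  have wth: "(THE w'. (w', r) \<in># E1) = P h"
  proof (rule the_equality)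
    show "(P h, r) \<in># E1" by (simp add: E1)
    fix w' assume "(w', r) \<in># E1"
    then show "w' = P h" using cr r_nl finL vf by (auto simp: E1 mem_pend dest!: C0in Cp_in)
  qed
  have cth: "(THE c'. (r, c') \<in># E1) = h"
  proof (rule the_equality)
    show "(r, h) \<in># E1" by (simp add: E1)
    fix c' assume "(r, c') \<in># E1"
    then show "c' = h" using wr vf finL by (auto simp: E1 mem_pend dest!: C0in Cp_in)
  qed
  have nf: "\<not> ((w, c) = (P h, r) \<or> (w, c) = (r, h))" using cr wr by auto
  have pe: "pend P (leaves N) = add_mset (P h, h) (pend P (leaves N - {h}))"
    by (rule pend_remove[OF finL vf(1)])
  have r1: "head_move_result (stnet P u h) u r (w, c) = (stnet P u h)\<lparr>arcs :=
     E1 - {#(P h, r), (r, h), (w, c)#} + {#(P h, h), (w, r), (r, c), (u, r)#}\<rparr>"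
    unfolding head_move_result_def Let_def E1_def[symmetric] wth cth
    by (subst if_not_P[OF nf]) (simp only: fst_conv snd_conv)
  have r2: "E1 - {#(P h, r), (r, h), (w, c)#} + {#(P h, h), (w, r), (r, c), (u, r)#}
     = C0 + {#(u,r),(w,r),(r,c)#} + pend P (leaves N)"
    unfolding E1 pe by (simp add: add_mset_commute)
  have res: "head_move_result (stnet P u h) u r (w, c) = F"
    unfolding r1 r2 F by (simp add: stnet_def)
  show ?thesis unfolding head_move_def
  proof (intro exI conjI)
    show "(u, r) \<in># arcs (stnet P u h)" by (simp add: st_arcs)
    show "r \<in> reticulations (stnet P u h)" by (rule st_ret[OF v])
    show "(w, c) \<in># arcs (stnet P u h) - {#(u, r)#}" unfolding st_arcs by (simp add: Cp)
    show "F = head_move_result (stnet P u h) u r (w, c)" using res by simp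
    show "phylo_net X F" by (rule phF)
  qed
qed

end

context gad begin
lemma st_leaves: "valid Q e h \<Longrightarrow> leaves (stnet Q e h) = leaves N"
  unfolding leaves_def using st_indeg st_outdeg by simp
end

lemma card_leaves: "phylo_net X N \<Longrightarrow> card (leaves N) = card X"
  unfolding phylo_net_def using bij_betw_same_card by blast

lemma outdeg_le2: "phylo_net X N \<Longrightarrow> v \<in> nodes N \<Longrightarrow> outdeg (arcs N) v \<le> 2"
  unfolding phylo_net_def by fastforce

lemma main_perm:
  fixes N :: "('v,'x) pnet" and g :: "'v \<Rightarrow> 'v"
  assumes ph: "phylo_net X N" and ret: "reticulations N \<noteq> {}"
    and gb: "bij_betw g (leaves N) (leaves N)" and gid: "\<forall>x. x \<notin> leaves N \<longrightarrow> g x = x"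
  shows "\<exists>m F. m \<le> 2 * card (leaves N) \<and> (head_move X ^^ m) N F \<and> nodes F = nodes N \<and> lab F = lab N
          \<and> arcs F = image_mset (map_prod g g) (arcs N) \<and> leaves F = leaves N"
proof -
  have finL: "finite (leaves N)" by (rule finite_leaves[OF ph])
  have Lsub: "leaves N \<subseteq> nodes N" unfolding leaves_def by auto
  have c2: "card (leaves N) \<ge> 2" using card_leaves[OF ph] ph unfolding phylo_net_def by simp
  have ends: "\<And>p. p \<in># arcs N \<Longrightarrow> fst p \<in> nodes N \<and> snd p \<in> nodes N" using phylo_ends[OF ph] by blast
  have tnl: "\<And>p. p \<in># arcs N \<Longrightarrow> fst p \<notin> leaves N" using phylo_tail_nl[OF ph] by blast
  have nl: "\<And>x. (x, x) \<notin># arcs N" using no_loop[OF ph] by blast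
  obtain r where r: "r \<in> reticulations N" using ret by blast
  have rn: "r \<in> nodes N" and rL: "r \<notin> leaves N" using r unfolding reticulations_def leaves_def by auto
  obtain u0 w0 c where uw0: "u0 \<noteq> w0" and fr0: "filter_mset (\<lambda>e. snd e = r) (arcs N) = {#(u0,r),(w0,r)#}"
    and fc: "filter_mset (\<lambda>e. fst e = r) (arcs N) = {#(r,c)#}"
    using ret_struct[OF ph r] by blast
  have memf: "\<And>x P. x \<in># filter_mset P (arcs N) \<Longrightarrow> x \<in># arcs N" by simp
  have a_u0: "(u0, r) \<in># arcs N" and a_w0: "(w0, r) \<in># arcs N" using memf[of _ "\<lambda>e. snd e = r"] fr0 by auto
  have a_c: "(r, c) \<in># arcs N" using memf[of _ "\<lambda>e. fst e = r"] fc by auto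
  have u0r: "u0 \<noteq> r" using a_u0 nl by blast
  have w0r: "w0 \<noteq> r" using a_w0 nl by blast
  obtain u w where uw: "u \<noteq> w" and fr: "filter_mset (\<lambda>e. snd e = r) (arcs N) = {#(u,r),(w,r)#}"
    and wc: "c \<notin> leaves N \<longrightarrow> (w, c) \<notin># arcs N" and uu: "u = u0 \<or> u = w0" and ww: "w = u0 \<or> w = w0"
  proof (cases "c \<notin> leaves N \<and> (w0, c) \<in># arcs N")
    case True
    have "(u0, c) \<notin># arcs N"
    proof
      assume "(u0, c) \<in># arcs N"
      then show False using three_parents[OF ph _ _ a_c, of u0 w0] True uw0 u0r w0r by blast
    qed
    moreover have "filter_mset (\<lambda>e. snd e = r) (arcs N) = {#(w0,r),(u0,r)#}" using fr0 by (simp add: add_mset_commute)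
    ultimately show ?thesis using that[of w0 u0] uw0 by auto
  next
    case False
    then show ?thesis using that[of u0 w0] uw0 fr0 by auto
  qed
  have a_u: "(u, r) \<in># arcs N" and a_w: "(w, r) \<in># arcs N" using uu ww a_u0 a_w0 by auto
  have ur: "u \<noteq> r" and wr: "w \<noteq> r" using uu ww u0r w0r by auto
  have cr: "c \<noteq> r" using a_c nl by blast
  have uL: "u \<notin> leaves N" and wL: "w \<notin> leaves N" using tnl a_u a_w by fastforce+
  have un: "u \<in> nodes N" and wn: "w \<in> nodes N" and cn: "c \<in> nodes N" using ends a_u a_w a_c by fastforce+
  define C0 where "C0 = filter_mset (\<lambda>p. snd p \<notin> leaves N \<and> snd p \<noteq> r \<and> fst p \<noteq> r) (arcs N)"
  have dec: "arcs N = C0 + {#(u,r),(w,r),(r,c)#} + pend (par N) (leaves N - {c})"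
    unfolding C0_def by (rule decomp[OF ph fr fc rL])
  have C0f: "\<And>p. p \<in># C0 \<Longrightarrow> p \<in># arcs N \<and> snd p \<notin> leaves N \<and> snd p \<noteq> r \<and> fst p \<noteq> r \<and> fst p \<notin> leaves N
                 \<and> fst p \<in> nodes N \<and> snd p \<in> nodes N"
    using tnl ends unfolding C0_def by auto
  have C0cnt: "\<And>p. count C0 p \<le> 1" using phylo_cnt[OF ph] unfolding C0_def by (simp add: count_filter_mset)
  have C0ac: "acyclic (set_mset C0)"
    by (rule acyclic_subset[OF phylo_acyc[OF ph]]) (use C0f in auto)
  have parf: "\<And>l. l \<in> leaves N \<Longrightarrow> (par N l, l) \<in># arcs N \<and> par N l \<in> nodes N \<and> par N l \<notin> leaves N"
  proof -
    fix l assume l: "l \<in> leaves N"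
    have "(par N l, l) \<in># filter_mset (\<lambda>e. snd e = l) (arcs N)" unfolding par_filter[OF ph l] by simp
    then have "(par N l, l) \<in># arcs N" by simp
    then show "(par N l, l) \<in># arcs N \<and> par N l \<in> nodes N \<and> par N l \<notin> leaves N" using ends tnl by fastforce
  qed
  have parr: "\<And>l. l \<in> leaves N \<Longrightarrow> par N l = r \<Longrightarrow> l = c"
  proof -
    fix l assume l: "l \<in> leaves N" and pr: "par N l = r"
    then have "(r, l) \<in># filter_mset (\<lambda>e. fst e = r) (arcs N)" using parf[OF l] by simp
    then show "l = c" unfolding fc by simp
  qed
  define ginv where "ginv = inv_into (leaves N) g"
  have ginj: "inj_on g (leaves N)" and gL: "g ` leaves N = leaves N" using gb by (auto simp: bij_betw_def)
  have gib: "bij_betw ginv (leaves N) (leaves N)" unfolding ginv_def by (rule bij_betw_inv_into[OF gb])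
  have gig: "\<And>l. l \<in> leaves N \<Longrightarrow> g (ginv l) = l" unfolding ginv_def using gL by (simp add: f_inv_into_f)
  have ggi: "\<And>l. l \<in> leaves N \<Longrightarrow> ginv (g l) = l" unfolding ginv_def using ginj by (simp add: inv_into_f_f)
  have giL: "\<And>l. l \<in> leaves N \<Longrightarrow> ginv l \<in> leaves N" using gib by (auto simp: bij_betw_def)
  have imC0: "image_mset (map_prod g g) C0 = C0"
  proof -
    have "image_mset (map_prod g g) C0 = image_mset (\<lambda>x. x) C0"
      by (rule image_mset_cong) (use C0f gid in \<open>auto simp: map_prod_def case_prod_beta\<close>)
    then show ?thesis by simp
  qed
  have reix: "image_mset (map_prod g g) (pend (par N) (leaves N - {c})) = pend (par N \<circ> ginv) (g ` (leaves N - {c}))"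
    unfolding ginv_def by (rule reindex[OF ginj gL _ finL]) (use parf gid in auto)
  have tgt: "image_mset (map_prod g g) (arcs N) = C0 + {#(u,r),(w,r),(r, g c)#} + pend (par N \<circ> ginv) (g ` (leaves N - {c}))"
    by (subst dec) (simp add: imC0 reix gid uL wL rL)
  have imginv: "\<And>P::'v\<Rightarrow>'v. image_mset (P \<circ> ginv) (mset_set (leaves N)) = image_mset P (mset_set (leaves N))"
  proof -
    fix P :: "'v \<Rightarrow> 'v"
    have ginj': "inj_on ginv (leaves N)" using gib by (simp add: bij_betw_def)
    have "image_mset ginv (mset_set (leaves N)) = mset_set (ginv ` leaves N)"
      by (rule image_mset_mset_set[OF ginj'])
    also have "ginv ` leaves N = leaves N" using gib by (simp add: bij_betw_def)
    finally have gi: "image_mset ginv (mset_set (leaves N)) = mset_set (leaves N)" .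
    have "image_mset (P \<circ> ginv) (mset_set (leaves N)) = image_mset P (image_mset ginv (mset_set (leaves N)))"
      by (simp add: image_mset.compositionality)
    also have "\<dots> = image_mset P (mset_set (leaves N))" by (simp only: gi)
    finally show "image_mset (P \<circ> ginv) (mset_set (leaves N)) = image_mset P (mset_set (leaves N))" .
  qed
  have outu: "outdeg (arcs N) u \<le> 2" by (rule outdeg_le2[OF ph un])
  show ?thesis
  proof (cases "c \<in> leaves N")
    case False
    note nlc = False
    have gc: "g c = c" using gid nlc by simp
    have Lc: "leaves N - {c} = leaves N" using nlc by simp
    have wcn: "(w, c) \<notin># arcs N" using wc nlc by simp
    define T where "T = par N \<circ> ginv"
    define Cp where "Cp = C0 + {#(w,c)#}"
    define SL where "SL = image_mset (par N) (mset_set (leaves N)) + {#u#}"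
    have dec': "arcs N = C0 + {#(u,r),(w,r),(r,c)#} + pend (par N) (leaves N)" using dec Lc by simp
    have tgt': "image_mset (map_prod g g) (arcs N) = C0 + {#(u,r),(w,r),(r,c)#} + pend T (leaves N)"
      using tgt gc Lc gL by (simp add: T_def)
    have Cpf: "\<forall>p\<in>#Cp. fst p \<in> nodes N \<and> snd p \<in> nodes N \<and> snd p \<notin> leaves N \<and> snd p \<noteq> r
                     \<and> fst p \<noteq> r \<and> fst p \<notin> leaves N"
      using C0f wn cn nlc cr wr wL by (auto simp: Cp_def)
    have Cpc: "\<forall>e. count Cp e \<le> 1"
    proof
      fix e
      show "count Cp e \<le> 1"
      proof (cases "e = (w,c)")
        case True
        have "count C0 (w,c) = 0" using C0f wcn by (meson count_inI)
        then show ?thesis using True by (simp add: Cp_def)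
      next
        case False
        then show ?thesis using C0cnt[of e] by (simp add: Cp_def)
      qed
    qed
    have Cpa: "acyclic (set_mset Cp)"
    proof -
      have "(c, w) \<notin> (set_mset C0)\<^sup>*"
      proof
        assume "(c, w) \<in> (set_mset C0)\<^sup>*"
        moreover have "set_mset C0 \<subseteq> set_mset (arcs N)" using C0f by auto
        ultimately have cw: "(c, w) \<in> (set_mset (arcs N))\<^sup>*" using rtrancl_mono by blast
        have "(w, c) \<in> (set_mset (arcs N))\<^sup>+" using a_w a_c by (meson trancl.simps set_mset_def r_into_trancl' trancl_into_trancl in_multiset_in_set)
        then have "(w, w) \<in> (set_mset (arcs N))\<^sup>+" using cw by (meson trancl_rtrancl_trancl)
        then show False using phylo_acyc[OF ph] unfolding acyclic_def by blast
      qed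
      then show ?thesis using C0ac by (simp add: Cp_def acyclic_insert)
    qed
    have SLf: "\<forall>v\<in>#SL. v \<in> nodes N \<and> v \<notin> leaves N \<and> v \<noteq> r"
      using parf parr nlc un uL ur finL by (auto simp: SL_def)
    have inN: "\<And>v. indeg (arcs N) v = indeg Cp v + (if v = r then 2 else 0) + (if v \<in> leaves N then 1 else 0)"
      by (subst dec') (auto simp: Cp_def indeg_pend finL)
    have outN: "\<And>v. outdeg (arcs N) v = outdeg Cp v + (if v = r then 1 else 0) + count SL v"
      by (subst dec') (auto simp: Cp_def SL_def outdeg_pend finL count_image_mset_set)
    have TSL: "image_mset T (mset_set (leaves N)) + {#u#} = SL"
      unfolding T_def SL_def using imginv by simp
    interpret G: gadT X N r Cp SL T u
      by (intro gadT.intro gad.intro gadT_axioms.intro) (fact ph Cpc Cpa Cpf rn rL SLf inN outN TSL)+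
    define F where "F = N\<lparr>arcs := C0 + {#(u,r),(w,r),(r,c)#} + pend T (leaves N)\<rparr>"
    have Bh: "\<forall>p\<in>#C0 + {#(u,r),(w,r),(r,c)#}. snd p \<notin> leaves N" using C0f rL nlc by auto
    have imT: "image_mset T (mset_set (leaves N)) = image_mset (par N) (mset_set (leaves N))"
      unfolding T_def by (rule imginv)
    have Tv: "\<forall>l\<in>leaves N. T l \<in> nodes N \<and> T l \<notin> leaves N" using parf giL by (simp add: T_def)
    have phF: "phylo_net X F" and lF: "leaves F = leaves N"
      using pend_swap[OF ph dec' Bh imT Tv] by (simp_all add: F_def)
    have aF: "arcs F = image_mset (map_prod g g) (arcs N)" using tgt' by (simp add: F_def)
    show ?thesis
    proof (cases "G.D (par N) = 0")
      case True
      have "pend T (leaves N) = pend (par N) (leaves N)"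
        by (rule pend_cong) (use G.D_zero[OF True] in auto)
      then have "F = N" using dec' by (simp add: F_def)
      then show ?thesis using aF lF by (intro exI[of _ 0] exI[of _ F]) auto
    next
      case False
      have cu: "card {l\<in>leaves N. par N l = u} \<le> 1"
        using outu outN[of u] count_image_mset_set[OF finL, of "par N" u] by (simp add: SL_def)
      obtain x1 where x1: "x1 \<in> leaves N" "par N x1 \<noteq> T x1" "par N x1 \<noteq> u"
        and x1b: "G.D ((par N)(x1:=u)) + 1 \<le> card (leaves N) \<or> G.nc ((par N)(x1:=u)) (par N x1)"
        using G.choose_x1[OF SL_def[symmetric] False cu c2] by blast
      have v1: "G.valid (par N) u x1" unfolding G.valid_def using x1 SL_def by simp
      have step1: "head_move X N (G.stnet (par N) u x1)"
        by (rule G.phase_in[OF dec' Cp_def v1 nlc wr cr])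
      have eqv: "G.stnet (par N) u x1 = G.stnet ((par N)(x1:=u)) (par N x1) x1" by (rule G.stnet_equiv[OF x1(1)])
      have v1': "G.valid ((par N)(x1:=u)) (par N x1) x1" by (rule G.valid_equiv[OF v1])
      have J: "T x1 \<noteq> par N x1" using x1 by simp
      obtain k h' where k: "k \<le> G.Phi ((par N)(x1:=u)) (par N x1)"
        and pth: "(head_move X ^^ k) (G.stnet ((par N)(x1:=u)) (par N x1) x1) (G.stnet T u h')"
        and vh: "G.valid T u h'"
        using G.core v1' J by blast
      have step3: "head_move X (G.stnet T u h') F"
        by (rule G.phase_out[OF Cp_def vh wr cr nlc F_def phF])
      have p2: "(head_move X ^^ Suc k) (G.stnet (par N) u x1) F"
        using relpowp_Suc_I[OF pth step3] eqv by simp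
      have path: "(head_move X ^^ Suc (Suc k)) N F"
        using relpowp_Suc_I2[of "head_move X", OF step1 p2] .
      have Dl: "G.D ((par N)(x1:=u)) \<le> card (leaves N)" by (rule G.D_le)
      have "Suc (Suc k) \<le> 2 * card (leaves N)"
        using k x1b x1(3) Dl c2 unfolding G.Phi_def by (auto split: if_splits)
      then show ?thesis using path aF lF by (intro exI[of _ "Suc (Suc k)"] exI[of _ F]) (simp add: F_def)
    qed
  next
    case True
    note lc = True
    have parc: "par N c = r"
    proof -
      have "count (arcs N) (r, c) \<noteq> 0" using a_c by simp
      then show ?thesis using count_leaf_arc[OF ph lc, of r] by (simp split: if_splits)
    qed
    define pc where "pc = g c"
    have pcL: "pc \<in> leaves N" using gL lc pc_def by blast
    define Q0 where "Q0 = (par N)(c := w)"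
    define T where "T = Q0 \<circ> ginv"
    define SL where "SL = image_mset Q0 (mset_set (leaves N)) + {#u#}"
    have Cpf: "\<forall>p\<in>#C0. fst p \<in> nodes N \<and> snd p \<in> nodes N \<and> snd p \<notin> leaves N \<and> snd p \<noteq> r
                     \<and> fst p \<noteq> r \<and> fst p \<notin> leaves N"
      using C0f by auto
    have Cpc: "\<forall>e. count C0 e \<le> 1" using C0cnt by blast
    have Q0f: "\<And>l. l \<in> leaves N \<Longrightarrow> Q0 l \<in> nodes N \<and> Q0 l \<notin> leaves N \<and> Q0 l \<noteq> r"
    proof -
      fix l assume l: "l \<in> leaves N"
      show "Q0 l \<in> nodes N \<and> Q0 l \<notin> leaves N \<and> Q0 l \<noteq> r"
      proof (cases "l = c")
        case True then show ?thesis using wn wL wr by (simp add: Q0_def)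
      next
        case False
        then have "par N l \<noteq> r" using parr[OF l] by blast
        then show ?thesis using parf[OF l] False by (simp add: Q0_def)
      qed
    qed
    have SLf: "\<forall>v\<in>#SL. v \<in> nodes N \<and> v \<notin> leaves N \<and> v \<noteq> r"
      using Q0f un uL ur finL by (auto simp: SL_def)
    have inN: "\<And>v. indeg (arcs N) v = indeg C0 v + (if v = r then 2 else 0) + (if v \<in> leaves N then 1 else 0)"
      by (subst dec) (use lc in \<open>auto simp: indeg_pend finL\<close>)
    have Q0c: "\<And>v. card {l\<in>leaves N - {c}. Q0 l = v} = card {l\<in>leaves N - {c}. par N l = v}"
    proof -
      fix v have "{l\<in>leaves N - {c}. Q0 l = v} = {l\<in>leaves N - {c}. par N l = v}" by (auto simp: Q0_def)
      then show "card {l\<in>leaves N - {c}. Q0 l = v} = card {l\<in>leaves N - {c}. par N l = v}" by simp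
    qed
    have outN: "\<And>v. outdeg (arcs N) v = outdeg C0 v + (if v = r then 1 else 0) + count SL v"
    proof -
      fix v
      have "count SL v = card {l\<in>leaves N. Q0 l = v} + (if u = v then 1 else 0)"
        unfolding SL_def using count_image_mset_set[OF finL, of Q0 v] by simp
      also have "card {l\<in>leaves N. Q0 l = v} = card {l\<in>leaves N - {c}. par N l = v} + (if w = v then 1 else 0)"
        using card_remove_P[OF finL lc, of "\<lambda>l. Q0 l = v"] Q0c[of v] by (simp add: Q0_def)
      finally have cs: "count SL v = card {l\<in>leaves N - {c}. par N l = v} + (if w = v then 1 else 0) + (if u = v then 1 else 0)" .
      show "outdeg (arcs N) v = outdeg C0 v + (if v = r then 1 else 0) + count SL v"
        by (subst dec) (simp add: outdeg_pend finL cs)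
    qed
    have TSL: "image_mset T (mset_set (leaves N)) + {#u#} = SL"
      unfolding T_def SL_def using imginv by simp
    interpret G: gadT X N r C0 SL T u
      by (intro gadT.intro gad.intro gadT_axioms.intro) (fact ph Cpc C0ac Cpf rn rL SLf inN outN TSL)+
    have Nst: "G.stnet Q0 u c = N"
    proof -
      have "pend Q0 (leaves N - {c}) = pend (par N) (leaves N - {c})" by (rule pend_cong) (auto simp: Q0_def)
      then have "arcs (G.stnet Q0 u c) = arcs N" using dec by (simp add: G.st_arcs Q0_def)
      then show ?thesis by (simp add: G.stnet_def)
    qed
    have v0: "G.valid Q0 u c" unfolding G.valid_def using lc uw SL_def by (simp add: Q0_def)
    have Tpc: "T pc = w" unfolding T_def pc_def using ggi[OF lc] by (simp add: Q0_def)
    have gLc: "g ` (leaves N - {c}) = leaves N - {pc}"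
      using ginj lc gL unfolding pc_def by (simp add: inj_on_image_set_diff)
    have pT: "pend (par N \<circ> ginv) (leaves N - {pc}) = pend T (leaves N - {pc})"
    proof (rule pend_cong)
      fix l assume l: "l \<in> leaves N - {pc}"
      then have "ginv l \<noteq> c" using gig[of l] unfolding pc_def by auto
      then show "(par N \<circ> ginv) l = T l" by (simp add: T_def Q0_def)
    qed
    have aF: "arcs (G.stnet T u pc) = image_mset (map_prod g g) (arcs N)"
      using tgt gLc pT Tpc by (simp add: G.st_arcs pc_def)
    have vpc: "G.valid T u pc" unfolding G.valid_def using pcL Tpc uw TSL by auto
    obtain k h' where kb: "k + 1 \<le> 2 * card (leaves N)"
      and pth: "(head_move X ^^ k) N (G.stnet T u h')" and vh: "G.valid T u h'"
    proof (cases "T c = w")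
      case True
      have J: "T c \<noteq> u" using True uw by simp
      obtain k h' where k: "k \<le> G.Phi Q0 u"
        and pth: "(head_move X ^^ k) (G.stnet Q0 u c) (G.stnet T u h')" and vh: "G.valid T u h'"
        using G.core v0 J by blast
      have "G.D Q0 + 1 \<le> card (leaves N)" using G.D_le1[OF lc] True by (simp add: Q0_def)
      then have "k + 1 \<le> 2 * card (leaves N)" using k unfolding G.Phi_def by simp
      then show ?thesis using that pth vh Nst by simp
    next
      case False
      have eqv: "G.stnet Q0 u c = G.stnet (Q0(c:=u)) w c" using G.stnet_equiv[OF lc, of Q0 u] by (simp add: Q0_def)
      have v1: "G.valid (Q0(c:=u)) w c" using G.valid_equiv[OF v0] by (simp add: Q0_def)
      obtain k h' where k: "k \<le> G.Phi (Q0(c:=u)) w"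
        and pth: "(head_move X ^^ k) (G.stnet (Q0(c:=u)) w c) (G.stnet T u h')" and vh: "G.valid T u h'"
        using G.core v1 False by blast
      have Dl: "G.D (Q0(c:=u)) \<le> card (leaves N)" by (rule G.D_le)
      have "k + 1 \<le> 2 * card (leaves N)" using k Dl uw c2 unfolding G.Phi_def by (auto split: if_splits)
      then show ?thesis using that pth vh Nst eqv by simp
    qed
    show ?thesis
    proof (cases "h' = pc")
      case True
      then show ?thesis using pth kb aF G.st_leaves[OF vpc]
        by (intro exI[of _ k] exI[of _ "G.stnet T u pc"]) auto
    next
      case False
      have st: "head_move X (G.stnet T u h') (G.stnet T u pc)"
        using G.st_move(1)[OF vh pcL False[symmetric]] Tpc uw by simp
      have "(head_move X ^^ Suc k) N (G.stnet T u pc)" by (rule relpowp_Suc_I[OF pth st])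
      then show ?thesis using kb aF G.st_leaves[OF vpc]
        by (intro exI[of _ "Suc k"] exI[of _ "G.stnet T u pc"]) auto
    qed
  qed
qed


theorem mainTheorem12:
  fixes X :: "'x set" and N :: "('v, 'x) pnet" and N' :: "('w, 'x) pnet" and k n :: nat
  assumes "phylo_net X N" and "phylo_net X N'"
    and "k > 0" and "tier N = k" and "tier N' = k"
    and "card X = n"
    and "unlabelled_iso N N'"
  shows "\<exists>m \<le> 2 * n. \<exists>S :: nat \<Rightarrow> ('v, 'x) pnet.
           S 0 = N \<and> (\<forall>i < m. head_move X (S i) (S (Suc i))) \<and> labelled_iso (S m) N'"
proof -
  note ph = assms(1) and ph' = assms(2)
  obtain \<phi> where b: "bij_betw \<phi> (nodes N) (nodes N')" and a: "image_mset (map_prod \<phi> \<phi>) (arcs N) = arcs N'"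
    using assms(7) unfolding unlabelled_iso_def by blast
  have ends: "\<forall>e\<in>#arcs N. fst e \<in> nodes N \<and> snd e \<in> nodes N" by (rule phylo_ends[OF ph])
  have Lsub: "leaves N \<subseteq> nodes N" unfolding leaves_def by auto
  have L': "leaves N' = \<phi> ` leaves N" by (rule leaves_iso[OF b a ends])
  have labN: "bij_betw (lab N) (leaves N) X" using ph unfolding phylo_net_def by blast
  have labN': "bij_betw (lab N') (leaves N') X" using ph' unfolding phylo_net_def by blast
  have bphi: "bij_betw \<phi> (leaves N) (leaves N')" using bij_betw_subset[OF b Lsub L'[symmetric]] .
  define \<pi>0 where "\<pi>0 = inv_into (leaves N) (lab N) \<circ> (lab N' \<circ> \<phi>)"
  have b0: "bij_betw \<pi>0 (leaves N) (leaves N)"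
    unfolding \<pi>0_def by (rule bij_betw_trans[OF bij_betw_trans[OF bphi labN'] bij_betw_inv_into[OF labN]])
  define g where "g = (\<lambda>x. if x \<in> leaves N then \<pi>0 x else x)"
  have gb: "bij_betw g (leaves N) (leaves N)" using b0 by (rule bij_betw_cong[THEN iffD1, rotated]) (simp add: g_def)
  have gid: "\<forall>x. x \<notin> leaves N \<longrightarrow> g x = x" by (simp add: g_def)
  have gL: "g ` leaves N = leaves N" using gb by (simp add: bij_betw_def)
  have glab: "\<forall>x\<in>leaves N. lab N (g x) = lab N' (\<phi> x)"
  proof
    fix x assume x: "x \<in> leaves N"
    have "lab N' (\<phi> x) \<in> X" using bij_betwE[OF bphi] bij_betwE[OF labN'] x by blast
    then have "lab N' (\<phi> x) \<in> lab N ` leaves N" using labN by (simp add: bij_betw_def)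
    then show "lab N (g x) = lab N' (\<phi> x)" using x by (simp add: g_def \<pi>0_def f_inv_into_f)
  qed
  have gbn: "bij_betw g (nodes N) (nodes N)"
  proof -
    have "bij_betw g (nodes N - leaves N) (nodes N - leaves N)"
      by (rule bij_betw_cong[THEN iffD1, rotated, OF bij_betw_id]) (simp add: g_def)
    from bij_betw_combine[OF gb this] have "bij_betw g (leaves N \<union> (nodes N - leaves N)) (leaves N \<union> (nodes N - leaves N))"
      by blast
    moreover have "leaves N \<union> (nodes N - leaves N) = nodes N" using Lsub by blast
    ultimately show ?thesis by simp
  qed
  have ret: "reticulations N \<noteq> {}" using assms(3,4) unfolding tier_def by auto
  obtain m F where m: "m \<le> 2 * card (leaves N)" and pth: "(head_move X ^^ m) N F"
    and F: "nodes F = nodes N" "lab F = lab N" "arcs F = image_mset (map_prod g g) (arcs N)" "leaves F = leaves N"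
    using main_perm[OF ph ret gb gid] by blast
  have li: "labelled_iso F N'" by (rule lab_iso_final[OF b a ends gbn glab gL F])
  obtain S where S: "S 0 = N" "S m = F" "\<forall>i<m. head_move X (S i) (S (Suc i))"
    using pth unfolding relpowp_fun_conv by blast
  have "card (leaves N) = n" using card_leaves[OF ph] assms(6) by simp
  then show ?thesis using m S li by auto
qed

end
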